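(* Let $H_0$ be a lattice Hamiltonian satisfying the Lieb–Robinson bound described in the context, let $\gamma>0$, $q>0$, and let $f_q(t)=\exp(-t^2/2q)\,[\exp(i3t/4)-\exp(-i3t/4)]/(it)$. If $O$ is supported on a set $A$, then for every $l$ there is an operator $W^l_{\gamma,f_q}(O)$ supported on $b_l(A)$ with $$\Vert W_{\gamma,f_q}(O)-W^l_{\gamma,f_q}(O)\Vert\le\Bigl(C\frac{q}{l\gamma/v_{LR}}\exp[-(l\gamma/v_{LR})^2/2q]+C\sqrt q\, g(l)|A|\Bigr)\Vert O\Vert,$$ where $C$ is a numerical constant.
   Context: Finite lattice with metric ${\rm dist}$, finite-dimensional site Hilbert spaces; $H_0=\sum_Z H_Z$ with $H_Z$ Hermitian supported on $Z$, ${\rm diam}(Z)\le R$, $\sup_i\sum_{Z\ni i}\Vert H_Z\Vert\le J$. $b_l(A)$ = sites within distance $l$ of $A$, $|A|$ = cardinality. Lieb–Robinson bound: there are $v_{LR}>0$ and a function $g$ (decaying faster than exponentially in $l/R$) such that for any $O$ supported on $A$, any $l$ and any $|t|\le l/v_{LR}$, $e^{iH_0t}Oe^{-iH_0t}$ can be approximated by an operator supported on $b_l(A)$ within operator-norm error $\frac{v_{LR}|t|}{l}g(l)|A|\Vert O\Vert$. For a filter function $G$, $W_{\gamma,G}(O)=\gamma\int dt\,G(\gamma t)e^{iH_0t}Oe^{-iH_0t}$. *)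

theory Defs
  imports "HOL-Analysis.Analysis"
begin

text \<open>Sites are natural numbers (any finite
lattice can be enumerated), the lattice is a finite set Lam of sites with a metric dd,
site i carries the Hilbert space C^(dm i). The full Hilbert space has the product
basis of configurations sigma with sigma i < dm i for i in Lam (and sigma i = 0 outside Lam).
Operators are matrices in that basis.\<close>

type_synonym qop = "(nat \<Rightarrow> nat) \<Rightarrow> (nat \<Rightarrow> nat) \<Rightarrow> complex"

definition confs :: "nat set \<Rightarrow> (nat \<Rightarrow> nat) \<Rightarrow> (nat \<Rightarrow> nat) set" where
  "confs Lam dm = {\<sigma>. (\<forall>i\<in>Lam. \<sigma> i < dm i) \<and> (\<forall>i. i \<notin> Lam \<longrightarrow> \<sigma> i = 0)}"

definition mmult :: "(nat \<Rightarrow> nat) set \<Rightarrow> qop \<Rightarrow> qop \<Rightarrow> qop" where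
  "mmult S M N = (\<lambda>a b. \<Sum>c\<in>S. M a c * N c b)"

definition mid :: qop where
  "mid = (\<lambda>a b. if a = b then 1 else 0)"

fun mpow :: "(nat \<Rightarrow> nat) set \<Rightarrow> qop \<Rightarrow> nat \<Rightarrow> qop" where
  "mpow S M 0 = mid"
| "mpow S M (Suc n) = mmult S M (mpow S M n)"

definition mexp :: "(nat \<Rightarrow> nat) set \<Rightarrow> qop \<Rightarrow> qop" where
  "mexp S M = (\<lambda>a b. \<Sum>n. mpow S M n a b / of_nat (fact n))"

definition mvec :: "(nat \<Rightarrow> nat) set \<Rightarrow> qop \<Rightarrow> ((nat \<Rightarrow> nat) \<Rightarrow> complex) \<Rightarrow> ((nat \<Rightarrow> nat) \<Rightarrow> complex)" where
  "mvec S M x = (\<lambda>a. \<Sum>b\<in>S. M a b * x b)"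

definition vnorm :: "(nat \<Rightarrow> nat) set \<Rightarrow> ((nat \<Rightarrow> nat) \<Rightarrow> complex) \<Rightarrow> real" where
  "vnorm S x = sqrt (\<Sum>a\<in>S. (cmod (x a))\<^sup>2)"

definition opnorm :: "(nat \<Rightarrow> nat) set \<Rightarrow> qop \<Rightarrow> real" where
  "opnorm S M = Sup {vnorm S (mvec S M x) | x. vnorm S x \<le> 1}"

definition hermitian :: "(nat \<Rightarrow> nat) set \<Rightarrow> qop \<Rightarrow> bool" where
  "hermitian S M \<longleftrightarrow> (\<forall>a\<in>S. \<forall>b\<in>S. M a b = cnj (M b a))"

text \<open>M is supported on A: M = M_A \<otimes> identity on the complement of A in Lam.\<close>
definition supported_on :: "nat set \<Rightarrow> (nat \<Rightarrow> nat) \<Rightarrow> nat set \<Rightarrow> qop \<Rightarrow> bool" where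
  "supported_on Lam dm A M \<longleftrightarrow>
     (\<forall>\<sigma>\<in>confs Lam dm. \<forall>\<tau>\<in>confs Lam dm.
        (\<exists>i\<in>Lam - A. \<sigma> i \<noteq> \<tau> i) \<longrightarrow> M \<sigma> \<tau> = 0) \<and>
     (\<forall>\<sigma>\<in>confs Lam dm. \<forall>\<tau>\<in>confs Lam dm. \<forall>\<sigma>'\<in>confs Lam dm. \<forall>\<tau>'\<in>confs Lam dm.
        (\<forall>i\<in>A. \<sigma> i = \<sigma>' i \<and> \<tau> i = \<tau>' i) \<and>
        (\<forall>i\<in>Lam - A. \<sigma> i = \<tau> i \<and> \<sigma>' i = \<tau>' i) \<longrightarrow> M \<sigma> \<tau> = M \<sigma>' \<tau>')"

definition bnbhd :: "nat set \<Rightarrow> (nat \<Rightarrow> nat \<Rightarrow> real) \<Rightarrow> real \<Rightarrow> nat set \<Rightarrow> nat set" where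
  "bnbhd Lam dd l A = {j\<in>Lam. \<exists>i\<in>A. dd i j \<le> l}"

definition metric_lattice :: "nat set \<Rightarrow> (nat \<Rightarrow> nat \<Rightarrow> real) \<Rightarrow> (nat \<Rightarrow> nat) \<Rightarrow> bool" where
  "metric_lattice Lam dd dm \<longleftrightarrow> finite Lam \<and> (\<forall>i\<in>Lam. dm i \<ge> 1) \<and>
     (\<forall>i\<in>Lam. \<forall>j\<in>Lam. dd i j \<ge> 0 \<and> dd i j = dd j i \<and> (dd i j = 0 \<longleftrightarrow> i = j)) \<and>
     (\<forall>i\<in>Lam. \<forall>j\<in>Lam. \<forall>k\<in>Lam. dd i k \<le> dd i j + dd j k)"

definition local_hamiltonian ::
  "nat set \<Rightarrow> (nat \<Rightarrow> nat \<Rightarrow> real) \<Rightarrow> (nat \<Rightarrow> nat) \<Rightarrow> nat set set \<Rightarrow> (nat set \<Rightarrow> qop) \<Rightarrow> real \<Rightarrow> real \<Rightarrow> bool" where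
  "local_hamiltonian Lam dd dm Zs HZ R J \<longleftrightarrow>
     Zs \<subseteq> Pow Lam \<and>
     (\<forall>Z\<in>Zs. hermitian (confs Lam dm) (HZ Z) \<and> supported_on Lam dm Z (HZ Z) \<and>
              (\<forall>i\<in>Z. \<forall>j\<in>Z. dd i j \<le> R)) \<and>
     (\<forall>i\<in>Lam. (\<Sum>Z\<in>{Z\<in>Zs. i \<in> Z}. opnorm (confs Lam dm) (HZ Z)) \<le> J)"

definition ham_sum :: "nat set \<Rightarrow> (nat \<Rightarrow> nat) \<Rightarrow> nat set set \<Rightarrow> (nat set \<Rightarrow> qop) \<Rightarrow> qop" where
  "ham_sum Lam dm Zs HZ = (\<lambda>a b. \<Sum>Z\<in>Zs. HZ Z a b)"

definition heis :: "(nat \<Rightarrow> nat) set \<Rightarrow> qop \<Rightarrow> real \<Rightarrow> qop \<Rightarrow> qop" where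
  "heis S H t X = mmult S (mmult S (mexp S (\<lambda>a b. \<i> * of_real t * H a b)) X)
                          (mexp S (\<lambda>a b. - \<i> * of_real t * H a b))"

definition mdiff :: "qop \<Rightarrow> qop \<Rightarrow> qop" where
  "mdiff M N = (\<lambda>a b. M a b - N a b)"

definition lieb_robinson_bound ::
  "nat set \<Rightarrow> (nat \<Rightarrow> nat \<Rightarrow> real) \<Rightarrow> (nat \<Rightarrow> nat) \<Rightarrow> qop \<Rightarrow> real \<Rightarrow> (real \<Rightarrow> real) \<Rightarrow> bool" where
  "lieb_robinson_bound Lam dd dm H v g \<longleftrightarrow>
     (\<forall>A X l t. A \<subseteq> Lam \<longrightarrow> supported_on Lam dm A X \<longrightarrow> l > 0 \<longrightarrow> \<bar>t\<bar> \<le> l / v \<longrightarrow>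
        (\<exists>X'. supported_on Lam dm (bnbhd Lam dd l A) X' \<and>
          opnorm (confs Lam dm) (mdiff (heis (confs Lam dm) H t X) X')
            \<le> v * \<bar>t\<bar> / l * g l * real (card A) * opnorm (confs Lam dm) X))"

definition faster_than_exp :: "(real \<Rightarrow> real) \<Rightarrow> real \<Rightarrow> bool" where
  "faster_than_exp g R \<longleftrightarrow> (\<forall>\<kappa>>0. ((\<lambda>l. g l * exp (\<kappa> * l / R)) \<longlongrightarrow> 0) at_top)"

definition Wfilt :: "(nat \<Rightarrow> nat) set \<Rightarrow> qop \<Rightarrow> real \<Rightarrow> (real \<Rightarrow> complex) \<Rightarrow> qop \<Rightarrow> qop" where
  "Wfilt S H \<gamma> G X = (\<lambda>a b. of_real \<gamma> * integral UNIV (\<lambda>t. G (\<gamma> * t) * heis S H t X a b))"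

definition fq :: "real \<Rightarrow> real \<Rightarrow> complex" where
  "fq q t = of_real (exp (- t\<^sup>2 / (2 * q))) *
     (exp (\<i> * of_real (3 * t / 4)) - exp (- (\<i> * of_real (3 * t / 4)))) / (\<i> * of_real t)"

end

theory Submission
  imports Defs
begin

lemma mpow_scale: "mpow S (\<lambda>a b. c * M a b) n = (\<lambda>a b. c ^ n * mpow S M n a b)"
proof (induction n)
  case 0 then show ?case by (simp add: mid_def)
next
  case (Suc n)
  show ?case by (rule ext, rule ext) (simp add: Suc mmult_def sum_distrib_left mult_ac)
qed

lemma mmult_mid_left: "finite S \<Longrightarrow> a \<in> S \<Longrightarrow> mmult S mid P a b = P a b"
proof -
  assume "finite S" "a \<in> S"
  have "mmult S mid P a b = (\<Sum>c\<in>S. if a = c then P c b else 0)"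
    unfolding mmult_def mid_def by (rule sum.cong) auto
  then show ?thesis using \<open>finite S\<close> \<open>a \<in> S\<close> by simp
qed

lemma mmult_mid_right: "finite S \<Longrightarrow> b \<in> S \<Longrightarrow> mmult S P mid a b = P a b"
proof -
  assume "finite S" "b \<in> S"
  have "mmult S P mid a b = (\<Sum>c\<in>S. if c = b then P a c else 0)"
    unfolding mmult_def mid_def by (rule sum.cong) auto
  then show ?thesis using \<open>finite S\<close> \<open>b \<in> S\<close> by simp
qed

lemma mpow_add: "finite S \<Longrightarrow> a \<in> S \<Longrightarrow>
   mmult S (mpow S M k) (mpow S M m) a b = mpow S M (k + m) a b"
proof (induction k arbitrary: a)
  case 0 then show ?case by (simp add: mmult_mid_left)
next
  case (Suc k)
  have "mmult S (mpow S M (Suc k)) (mpow S M m) a b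
      = (\<Sum>c\<in>S. (\<Sum>d\<in>S. M a d * mpow S M k d c) * mpow S M m c b)"
    by (simp add: mmult_def)
  also have "\<dots> = (\<Sum>d\<in>S. M a d * (\<Sum>c\<in>S. mpow S M k d c * mpow S M m c b))"
    by (simp add: sum_distrib_left sum_distrib_right mult_ac) (rule sum.swap)
  also have "\<dots> = (\<Sum>d\<in>S. M a d * mpow S M (k + m) d b)"
    using Suc.IH[OF Suc.prems(1)] by (simp add: mmult_def)
  also have "\<dots> = mpow S M (Suc k + m) a b" by (simp add: mmult_def)
  finally show ?case .
qed

lemma mpow_one: "finite S \<Longrightarrow> b \<in> S \<Longrightarrow> mpow S M 1 a b = M a b"
  by (simp add: mmult_mid_right)

lemma mpow_bound:
  assumes "finite S" "\<And>a c. a \<in> S \<Longrightarrow> c \<in> S \<Longrightarrow> cmod (M a c) \<le> B" "a \<in> S" "0 \<le> B"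
  shows "cmod (mpow S M n a b) \<le> (real (card S) * B) ^ n"
  using assms(3)
proof (induction n arbitrary: a)
  case 0 then show ?case by (simp add: mid_def)
next
  case (Suc n)
  have "cmod (mpow S M (Suc n) a b) = cmod (\<Sum>c\<in>S. M a c * mpow S M n c b)"
    by (simp add: mmult_def)
  also have "\<dots> \<le> (\<Sum>c\<in>S. cmod (M a c) * cmod (mpow S M n c b))"
    by (rule order_trans[OF norm_sum]) (simp add: norm_mult)
  also have "\<dots> \<le> (\<Sum>c\<in>S. B * (real (card S) * B) ^ n)"
    by (rule sum_mono, rule mult_mono) (auto intro: assms(2) Suc simp: assms(4))
  also have "\<dots> = (real (card S) * B) ^ Suc n" by (simp add: mult_ac)
  finally show ?case .
qed

lemma finite_bound_ex:
  assumes "finite S"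
  shows "\<exists>B\<ge>0. \<forall>a\<in>S. \<forall>c\<in>S. cmod (M a c) \<le> B"
proof (intro exI[of _ "\<Sum>a\<in>S. \<Sum>c\<in>S. cmod (M a c)"] conjI ballI)
  show "0 \<le> (\<Sum>a\<in>S. \<Sum>c\<in>S. cmod (M a c))" by (simp add: sum_nonneg)
  fix a c assume "a \<in> S" "c \<in> S"
  have "cmod (M a c) \<le> (\<Sum>c\<in>S. cmod (M a c))"
    using \<open>c \<in> S\<close> assms by (intro member_le_sum) auto
  also have "\<dots> \<le> (\<Sum>a\<in>S. \<Sum>c\<in>S. cmod (M a c))"
    using \<open>a \<in> S\<close> assms by (intro member_le_sum[where f="\<lambda>a. \<Sum>c\<in>S. cmod (M a c)"]) (auto simp: sum_nonneg)
  finally show "cmod (M a c) \<le> (\<Sum>a\<in>S. \<Sum>c\<in>S. cmod (M a c))" .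
qed

lemma mpow_herm:
  assumes "finite S" "hermitian S M" "a \<in> S" "b \<in> S"
  shows "cnj (mpow S M n a b) = mpow S M n b a"
  using assms(3,4)
proof (induction n arbitrary: a b)
  case 0 then show ?case by (simp add: mid_def)
next
  case (Suc n)
  have "cnj (mpow S M (Suc n) a b) = (\<Sum>c\<in>S. cnj (M a c) * cnj (mpow S M n c b))"
    by (simp add: mmult_def)
  also have "\<dots> = (\<Sum>c\<in>S. mpow S M n b c * mpow S M 1 c a)"
  proof (rule sum.cong[OF refl])
    fix c assume c: "c \<in> S"
    have "cnj (M a c) = M c a" using assms(2) c Suc.prems unfolding hermitian_def
      by (metis complex_cnj_cnj)
    moreover have "cnj (mpow S M n c b) = mpow S M n b c" using Suc.IH c Suc.prems by blast
    ultimately show "cnj (M a c) * cnj (mpow S M n c b) = mpow S M n b c * mpow S M 1 c a"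
      using mpow_one[OF assms(1) Suc.prems(1)] by simp
  qed
  also have "\<dots> = mpow S M (Suc n) b a"
    using mpow_add[OF assms(1) Suc.prems(2), of M n 1] by (simp add: mmult_def)
  finally show ?case .
qed

lemma mexp_series:
  "mexp S (\<lambda>a b. z * H a b) a b = (\<Sum>n. (mpow S H n a b / fact n) * z ^ n)"
  unfolding mexp_def mpow_scale by (simp add: mult_ac)

lemma mexp_summable_norm:
  assumes "finite S" "a \<in> S"
  shows "summable (\<lambda>n. norm ((mpow S H n a b / fact n) * z ^ n))"
proof -
  obtain B where B: "B \<ge> 0" "\<forall>a\<in>S. \<forall>c\<in>S. cmod (H a c) \<le> B"
    using finite_bound_ex[OF assms(1)] by blast
  define K where "K = real (card S) * B"
  have "summable (\<lambda>n. inverse (fact n) * (K * cmod z) ^ n)"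
    by (rule summable_exp)
  moreover have "norm (norm ((mpow S H n a b / fact n) * z ^ n)) \<le> inverse (fact n) * (K * cmod z) ^ n" for n
  proof -
    have "cmod (mpow S H n a b) \<le> K ^ n"
      unfolding K_def using mpow_bound[OF assms(1) _ assms(2) B(1)] B(2) by blast
    then have "cmod (mpow S H n a b) * cmod z ^ n \<le> K ^ n * cmod z ^ n"
      by (simp add: mult_right_mono)
    then show ?thesis
      by (simp add: norm_mult norm_divide norm_power power_mult_distrib divide_simps mult_ac)
  qed
  ultimately show ?thesis by (rule summable_comparison_test'[where N=0]) 
qed

lemma mexp_summable:
  assumes "finite S" "a \<in> S"
  shows "summable (\<lambda>n. (mpow S H n a b / fact n) * z ^ n)"
  by (rule summable_norm_cancel[OF mexp_summable_norm[OF assms]])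

lemma binom_exp_coeff:
  fixes z w :: complex
  shows "(\<Sum>k\<le>N. z ^ k / fact k * (w ^ (N - k) / fact (N - k))) = (z + w) ^ N / fact N"
proof -
  have "(z + w) ^ N / fact N = (\<Sum>k\<le>N. of_nat (N choose k) * z ^ k * w ^ (N - k)) / fact N"
    by (simp add: binomial_ring)
  also have "\<dots> = (\<Sum>k\<le>N. of_nat (N choose k) * z ^ k * w ^ (N - k) / fact N)"
    by (simp add: sum_divide_distrib)
  also have "\<dots> = (\<Sum>k\<le>N. z ^ k / fact k * (w ^ (N - k) / fact (N - k)))"
  proof (rule sum.cong[OF refl])
    fix k assume "k \<in> {..N}"
    then have "k \<le> N" by simp
    then show "of_nat (N choose k) * z ^ k * w ^ (N - k) / fact N = z ^ k / fact k * (w ^ (N - k) / fact (N - k))"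
      by (simp add: binomial_fact field_simps)
  qed
  finally show ?thesis by simp
qed

lemma mexp_mult:
  assumes S: "finite S" and a: "a \<in> S"
  shows "mmult S (mexp S (\<lambda>a b. z * H a b)) (mexp S (\<lambda>a b. w * H a b)) a b
       = mexp S (\<lambda>a b. (z + w) * H a b) a b"
proof -
  define \<alpha> where "\<alpha> c n = (mpow S H n a c / fact n) * z ^ n" for c n
  define \<beta> where "\<beta> c n = (mpow S H n c b / fact n) * w ^ n" for c n
  have sa: "summable (\<lambda>n. norm (\<alpha> c n))" if "c \<in> S" for c
    unfolding \<alpha>_def by (rule mexp_summable_norm[OF S a])
  have sb: "summable (\<lambda>n. norm (\<beta> c n))" if "c \<in> S" for c
    unfolding \<beta>_def by (rule mexp_summable_norm[OF S that])
  have "mmult S (mexp S (\<lambda>a b. z * H a b)) (mexp S (\<lambda>a b. w * H a b)) a b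
      = (\<Sum>c\<in>S. (\<Sum>n. \<alpha> c n) * (\<Sum>n. \<beta> c n))"
    by (simp add: mmult_def mexp_series \<alpha>_def \<beta>_def)
  also have "\<dots> = (\<Sum>c\<in>S. \<Sum>N. \<Sum>k\<le>N. \<alpha> c k * \<beta> c (N - k))"
    by (rule sum.cong[OF refl], rule Cauchy_product) (auto intro: sa sb)
  also have "\<dots> = (\<Sum>N. \<Sum>c\<in>S. \<Sum>k\<le>N. \<alpha> c k * \<beta> c (N - k))"
    by (rule suminf_sum[symmetric], rule summable_Cauchy_product) (auto intro: sa sb)
  also have "\<dots> = (\<Sum>N. (mpow S H N a b / fact N) * (z + w) ^ N)"
  proof (rule arg_cong[where f=suminf], rule ext)
    fix N
    have "(\<Sum>c\<in>S. \<Sum>k\<le>N. \<alpha> c k * \<beta> c (N - k))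
        = (\<Sum>k\<le>N. z ^ k / fact k * (w ^ (N - k) / fact (N - k)) *
              (\<Sum>c\<in>S. mpow S H k a c * mpow S H (N - k) c b))"
      unfolding \<alpha>_def \<beta>_def
      by (subst sum.swap) (simp add: sum_distrib_left mult_ac)
    also have "\<dots> = (\<Sum>k\<le>N. z ^ k / fact k * (w ^ (N - k) / fact (N - k)) * mpow S H N a b)"
    proof (rule sum.cong[OF refl])
      fix k assume "k \<in> {..N}"
      then have "k + (N - k) = N" by simp
      then show "z ^ k / fact k * (w ^ (N - k) / fact (N - k)) * (\<Sum>c\<in>S. mpow S H k a c * mpow S H (N - k) c b)
          = z ^ k / fact k * (w ^ (N - k) / fact (N - k)) * mpow S H N a b"
        using mpow_add[OF S a, of H k "N - k" b] by (simp add: mmult_def)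
    qed
    also have "\<dots> = (\<Sum>k\<le>N. z ^ k / fact k * (w ^ (N - k) / fact (N - k))) * mpow S H N a b"
      by (rule sum_distrib_right[symmetric])
    also have "\<dots> = (z + w) ^ N / fact N * mpow S H N a b"
      by (simp only: binom_exp_coeff)
    finally show "(\<Sum>c\<in>S. \<Sum>k\<le>N. \<alpha> c k * \<beta> c (N - k)) = (mpow S H N a b / fact N) * (z + w) ^ N"
      by simp
  qed
  also have "\<dots> = mexp S (\<lambda>a b. (z + w) * H a b) a b"
    by (simp add: mexp_series)
  finally show ?thesis .
qed

lemma mexp_zero: "mexp S (\<lambda>a b. 0 * H a b) a b = mid a b"
proof -
  have "mexp S (\<lambda>a b. 0 * H a b) a b = (\<Sum>n. (mpow S H n a b / fact n) * 0 ^ n)"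
    by (rule mexp_series)
  also have "\<dots> = mpow S H 0 a b / fact 0" by (rule powser_zero)
  also have "\<dots> = mid a b" by simp
  finally show ?thesis .
qed

lemma mexp_cnj:
  assumes S: "finite S" and h: "hermitian S H" and a: "a \<in> S" and b: "b \<in> S"
  shows "cnj (mexp S (\<lambda>a b. z * H a b) a b) = mexp S (\<lambda>a b. cnj z * H a b) b a"
proof -
  have "(\<lambda>n. (mpow S H n a b / fact n) * z ^ n) sums (mexp S (\<lambda>a b. z * H a b) a b)"
    unfolding mexp_series using mexp_summable[OF S a] by (rule summable_sums)
  then have "(\<lambda>n. cnj ((mpow S H n a b / fact n) * z ^ n)) sums cnj (mexp S (\<lambda>a b. z * H a b) a b)"
    by (subst sums_cnj)
  moreover have "(\<lambda>n. cnj ((mpow S H n a b / fact n) * z ^ n)) = (\<lambda>n. (mpow S H n b a / fact n) * (cnj z) ^ n)"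
    by (rule ext) (simp add: mpow_herm[OF S h a b])
  ultimately have "(\<lambda>n. (mpow S H n b a / fact n) * (cnj z) ^ n) sums cnj (mexp S (\<lambda>a b. z * H a b) a b)"
    by metis
  then show ?thesis unfolding mexp_series by (simp add: sums_iff)
qed

lemma mexp_unitary_sq:
  assumes S: "finite S" and h: "hermitian S H" and z: "cnj z = - z"
  shows "(\<Sum>a\<in>S. cnj (mvec S (mexp S (\<lambda>a b. z * H a b)) x a) * mvec S (mexp S (\<lambda>a b. z * H a b)) x a)
       = (\<Sum>a\<in>S. cnj (x a) * x a)"
proof -
  define U where "U = mexp S (\<lambda>a b. z * H a b)"
  define U' where "U' = mexp S (\<lambda>a b. (- z) * H a b)"
  have cU: "cnj (U a b) = U' b a" if "a \<in> S" "b \<in> S" for a b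
    unfolding U_def U'_def using mexp_cnj[OF S h that, of z] z by simp
  have "(\<Sum>a\<in>S. cnj (mvec S U x a) * mvec S U x a)
      = (\<Sum>a\<in>S. (\<Sum>b\<in>S. cnj (U a b) * cnj (x b)) * (\<Sum>b'\<in>S. U a b' * x b'))"
    by (simp add: mvec_def)
  also have "\<dots> = (\<Sum>a\<in>S. \<Sum>b\<in>S. \<Sum>b'\<in>S. cnj (x b) * x b' * (cnj (U a b) * U a b'))"
    by (simp add: sum_distrib_left sum_distrib_right mult_ac)
  also have "\<dots> = (\<Sum>b\<in>S. \<Sum>b'\<in>S. cnj (x b) * x b' * (\<Sum>a\<in>S. cnj (U a b) * U a b'))"
    by (subst sum.swap, rule sum.cong[OF refl], subst sum.swap) (simp add: sum_distrib_left)
  also have "\<dots> = (\<Sum>b\<in>S. \<Sum>b'\<in>S. cnj (x b) * x b' * mid b b')"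
  proof (intro sum.cong refl)
    fix b b' assume bb: "b \<in> S" "b' \<in> S"
    have "(\<Sum>a\<in>S. cnj (U a b) * U a b') = (\<Sum>a\<in>S. U' b a * U a b')"
      using cU bb by (intro sum.cong) auto
    also have "\<dots> = mmult S U' U b b'" by (simp add: mmult_def)
    also have "\<dots> = mexp S (\<lambda>a b. (- z + z) * H a b) b b'"
      unfolding U_def U'_def by (rule mexp_mult[OF S bb(1)])
    also have "\<dots> = mid b b'" using mexp_zero[of S H b b'] by simp
    finally show "cnj (x b) * x b' * (\<Sum>a\<in>S. cnj (U a b) * U a b') = cnj (x b) * x b' * mid b b'" by simp
  qed
  also have "\<dots> = (\<Sum>b\<in>S. cnj (x b) * x b)"
  proof (rule sum.cong[OF refl])
    fix b assume "b \<in> S"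
    have "(\<Sum>b'\<in>S. cnj (x b) * x b' * mid b b') = (\<Sum>b'\<in>S. if b = b' then cnj (x b) * x b' else 0)"
      by (rule sum.cong) (auto simp: mid_def)
    also have "\<dots> = cnj (x b) * x b" using S \<open>b \<in> S\<close> by simp
    finally show "(\<Sum>b'\<in>S. cnj (x b) * x b' * mid b b') = cnj (x b) * x b" .
  qed
  finally show ?thesis unfolding U_def .
qed

lemma vnorm_sq_complex: "complex_of_real ((vnorm S x)\<^sup>2) = (\<Sum>a\<in>S. cnj (x a) * x a)"
proof -
  have "(vnorm S x)\<^sup>2 = (\<Sum>a\<in>S. (cmod (x a))\<^sup>2)"
    unfolding vnorm_def by (simp add: sum_nonneg)
  then have "complex_of_real ((vnorm S x)\<^sup>2) = (\<Sum>a\<in>S. complex_of_real ((cmod (x a))\<^sup>2))"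
    by (metis of_real_sum)
  also have "\<dots> = (\<Sum>a\<in>S. cnj (x a) * x a)"
    by (rule sum.cong[OF refl]) (simp only: complex_norm_square mult.commute)
  finally show ?thesis .
qed

lemma vnorm_nonneg: "0 \<le> vnorm S x"
  unfolding vnorm_def by (simp add: sum_nonneg)

lemma mexp_unitary:
  assumes S: "finite S" and h: "hermitian S H" and z: "cnj z = - z"
  shows "vnorm S (mvec S (mexp S (\<lambda>a b. z * H a b)) x) = vnorm S x"
proof -
  have "complex_of_real ((vnorm S (mvec S (mexp S (\<lambda>a b. z * H a b)) x))\<^sup>2) = complex_of_real ((vnorm S x)\<^sup>2)"
    unfolding vnorm_sq_complex using mexp_unitary_sq[OF assms] .
  then have "(vnorm S (mvec S (mexp S (\<lambda>a b. z * H a b)) x))\<^sup>2 = (vnorm S x)\<^sup>2"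
    using of_real_eq_iff by blast
  then show ?thesis using vnorm_nonneg by (metis power2_eq_iff_nonneg)
qed

lemma vnorm_L2: "vnorm S x = L2_set (\<lambda>a. cmod (x a)) S"
  by (simp add: vnorm_def L2_set_def)

lemma vnorm_comp: "finite S \<Longrightarrow> a \<in> S \<Longrightarrow> cmod (x a) \<le> vnorm S x"
  unfolding vnorm_L2 by (rule member_le_L2_set)

lemma vnorm_cong: "(\<And>a. a \<in> S \<Longrightarrow> x a = y a) \<Longrightarrow> vnorm S x = vnorm S y"
  unfolding vnorm_def by (simp cong: sum.cong)

lemma vnorm_triangle: "vnorm S (\<lambda>a. u a + w a) \<le> vnorm S u + vnorm S w"
proof -
  have "vnorm S (\<lambda>a. u a + w a) \<le> L2_set (\<lambda>a. cmod (u a) + cmod (w a)) S"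
    unfolding vnorm_L2 by (rule L2_set_mono) (auto simp: norm_triangle_ineq)
  also have "\<dots> \<le> vnorm S u + vnorm S w"
    unfolding vnorm_L2 by (rule L2_set_triangle_ineq)
  finally show ?thesis .
qed

lemma vnorm_scale: "vnorm S (\<lambda>a. c * x a) = cmod c * vnorm S x"
  unfolding vnorm_L2 by (simp add: L2_set_right_distrib norm_mult)

lemma vnorm_le_sum: "vnorm S x \<le> (\<Sum>a\<in>S. cmod (x a))"
  unfolding vnorm_L2 by (rule L2_set_le_sum) simp

lemma vnorm_zero: "vnorm S (\<lambda>a. 0) = 0"
  by (simp add: vnorm_def)

lemma vnorm_eq0: "finite S \<Longrightarrow> vnorm S x = 0 \<Longrightarrow> a \<in> S \<Longrightarrow> x a = 0"
  using vnorm_comp[of S a x] by simp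

lemma mvec_scale_vec: "mvec S M (\<lambda>b. c * x b) = (\<lambda>a. c * mvec S M x a)"
  by (simp add: mvec_def sum_distrib_left mult_ac)

lemma mvec_add_mat: "mvec S (\<lambda>a b. M a b + N a b) x = (\<lambda>a. mvec S M x a + mvec S N x a)"
  by (simp add: mvec_def distrib_right sum.distrib)

lemma mvec_scale_mat: "mvec S (\<lambda>a b. c * M a b) x = (\<lambda>a. c * mvec S M x a)"
  by (simp add: mvec_def sum_distrib_left mult_ac)

lemma mvec_mmult: "mvec S (mmult S A B) x = mvec S A (mvec S B x)"
proof (rule ext)
  fix a
  have "mvec S (mmult S A B) x a = (\<Sum>c\<in>S. \<Sum>b\<in>S. A a b * B b c * x c)"
    by (simp add: mvec_def mmult_def sum_distrib_right)
  also have "\<dots> = (\<Sum>b\<in>S. \<Sum>c\<in>S. A a b * B b c * x c)" by (rule sum.swap)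
  also have "\<dots> = mvec S A (mvec S B x) a"
    by (simp add: mvec_def sum_distrib_left mult_ac)
  finally show "mvec S (mmult S A B) x a = mvec S A (mvec S B x) a" .
qed

lemma mvec_bound_sum:
  assumes "finite S"
  shows "vnorm S (mvec S M x) \<le> (\<Sum>a\<in>S. \<Sum>b\<in>S. cmod (M a b)) * vnorm S x"
proof -
  have "vnorm S (mvec S M x) \<le> (\<Sum>a\<in>S. cmod (mvec S M x a))" by (rule vnorm_le_sum)
  also have "\<dots> \<le> (\<Sum>a\<in>S. \<Sum>b\<in>S. cmod (M a b) * vnorm S x)"
  proof (rule sum_mono)
    fix a assume "a \<in> S"
    have "cmod (mvec S M x a) \<le> (\<Sum>b\<in>S. cmod (M a b * x b))"
      unfolding mvec_def by (rule norm_sum)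
    also have "\<dots> \<le> (\<Sum>b\<in>S. cmod (M a b) * vnorm S x)"
      by (rule sum_mono) (simp add: norm_mult mult_left_mono vnorm_comp[OF assms])
    finally show "cmod (mvec S M x a) \<le> (\<Sum>b\<in>S. cmod (M a b) * vnorm S x)" .
  qed
  also have "\<dots> = (\<Sum>a\<in>S. \<Sum>b\<in>S. cmod (M a b)) * vnorm S x"
    by (simp add: sum_distrib_right)
  finally show ?thesis .
qed

lemma opnorm_bdd:
  assumes "finite S"
  shows "bdd_above {vnorm S (mvec S M x) | x. vnorm S x \<le> 1}"
proof (rule bdd_aboveI)
  fix y assume "y \<in> {vnorm S (mvec S M x) | x. vnorm S x \<le> 1}"
  then obtain x where x: "y = vnorm S (mvec S M x)" "vnorm S x \<le> 1" by blast
  have "y \<le> (\<Sum>a\<in>S. \<Sum>b\<in>S. cmod (M a b)) * vnorm S x" using x mvec_bound_sum[OF assms] by simp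
  also have "\<dots> \<le> (\<Sum>a\<in>S. \<Sum>b\<in>S. cmod (M a b))"
    using x(2) by (simp add: mult_left_le sum_nonneg)
  finally show "y \<le> (\<Sum>a\<in>S. \<Sum>b\<in>S. cmod (M a b))" .
qed

lemma opnorm_upper: "finite S \<Longrightarrow> vnorm S x \<le> 1 \<Longrightarrow> vnorm S (mvec S M x) \<le> opnorm S M"
  unfolding opnorm_def by (rule cSup_upper[OF _ opnorm_bdd]) auto

lemma opnorm_least:
  assumes "\<And>x. vnorm S x \<le> 1 \<Longrightarrow> vnorm S (mvec S M x) \<le> K"
  shows "opnorm S M \<le> K"
  unfolding opnorm_def
proof (rule cSup_least)
  show "{vnorm S (mvec S M x) |x. vnorm S x \<le> 1} \<noteq> {}"
  proof -
    have "vnorm S (mvec S M (\<lambda>a. 0)) \<in> {vnorm S (mvec S M x) |x. vnorm S x \<le> 1}"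
      using vnorm_zero[of S] by auto
    then show ?thesis by blast
  qed
qed (use assms in auto)

lemma opnorm_nonneg: "finite S \<Longrightarrow> 0 \<le> opnorm S M"
  using opnorm_upper[of S "\<lambda>a. 0" M] vnorm_zero[of S] vnorm_nonneg[of S] by (metis order_trans zero_le_one)

lemma opnorm_mvec:
  assumes S: "finite S"
  shows "vnorm S (mvec S M x) \<le> opnorm S M * vnorm S x"
proof (cases "vnorm S x = 0")
  case True
  then have "mvec S M x = (\<lambda>a. 0)"
    using vnorm_eq0[OF S True] by (auto simp: mvec_def)
  then show ?thesis using True vnorm_zero by simp
next
  case False
  define v where "v = vnorm S x"
  have v: "v > 0" using False vnorm_nonneg[of S x] unfolding v_def by linarith
  define y where "y = (\<lambda>b. complex_of_real (1 / v) * x b)"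
  have "vnorm S y = 1" unfolding y_def vnorm_scale using v by (simp add: v_def norm_divide)
  then have "vnorm S (mvec S M y) \<le> opnorm S M" by (intro opnorm_upper[OF S]) simp
  moreover have "vnorm S (mvec S M y) = vnorm S (mvec S M x) / v"
    unfolding y_def mvec_scale_vec vnorm_scale using v by (simp add: norm_divide)
  ultimately show ?thesis using v unfolding v_def by (simp add: divide_le_eq)
qed

lemma opnorm_le_sum: "finite S \<Longrightarrow> opnorm S M \<le> (\<Sum>a\<in>S. \<Sum>b\<in>S. cmod (M a b))"
  by (rule opnorm_least, rule order_trans[OF mvec_bound_sum])
     (auto simp: mult_left_le sum_nonneg)

lemma opnorm_entry:
  assumes S: "finite S" and a: "a \<in> S" and b: "b \<in> S"
  shows "cmod (M a b) \<le> opnorm S M"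
proof -
  define x where "x = (\<lambda>c. if c = b then (1::complex) else 0)"
  have "vnorm S x = 1"
  proof -
    have "(\<Sum>c\<in>S. (cmod (x c))\<^sup>2) = (\<Sum>c\<in>S. if c = b then 1 else 0)"
      by (rule sum.cong) (auto simp: x_def)
    also have "\<dots> = 1" using S b by simp
    finally show ?thesis by (simp add: vnorm_def)
  qed
  moreover have "mvec S M x a = M a b"
  proof -
    have "mvec S M x a = (\<Sum>c\<in>S. if c = b then M a c else 0)"
      unfolding mvec_def by (rule sum.cong) (auto simp: x_def)
    then show ?thesis using S b by simp
  qed
  ultimately show ?thesis
    using vnorm_comp[OF S a, of "mvec S M x"] opnorm_upper[OF S, of x M] by simp
qed

lemma opnorm_cong:
  assumes "\<And>a b. a \<in> S \<Longrightarrow> b \<in> S \<Longrightarrow> M a b = N a b"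
  shows "opnorm S M = opnorm S N"
proof -
  have "vnorm S (mvec S M x) = vnorm S (mvec S N x)" for x
    by (rule vnorm_cong) (simp add: mvec_def assms cong: sum.cong)
  then show ?thesis unfolding opnorm_def by simp
qed

lemma opnorm_add:
  assumes S: "finite S"
  shows "opnorm S (\<lambda>a b. M a b + N a b) \<le> opnorm S M + opnorm S N"
proof (rule opnorm_least)
  fix x assume x: "vnorm S x \<le> 1"
  have "vnorm S (mvec S (\<lambda>a b. M a b + N a b) x) \<le> vnorm S (mvec S M x) + vnorm S (mvec S N x)"
    unfolding mvec_add_mat by (rule vnorm_triangle)
  also have "\<dots> \<le> opnorm S M * vnorm S x + opnorm S N * vnorm S x"
    by (intro add_mono opnorm_mvec S)
  also have "\<dots> \<le> opnorm S M + opnorm S N"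
    using x opnorm_nonneg[OF S] by (intro add_mono mult_left_le) auto
  finally show "vnorm S (mvec S (\<lambda>a b. M a b + N a b) x) \<le> opnorm S M + opnorm S N" .
qed

lemma opnorm_tri3:
  assumes S: "finite S"
  shows "opnorm S (\<lambda>a b. M a b - N a b) \<le> opnorm S (\<lambda>a b. M a b - P a b) + opnorm S (\<lambda>a b. P a b - N a b)"
  using opnorm_add[OF S, of "\<lambda>a b. M a b - P a b" "\<lambda>a b. P a b - N a b"] by simp

lemma opnorm_scale_le:
  assumes S: "finite S"
  shows "opnorm S (\<lambda>a b. c * M a b) \<le> cmod c * opnorm S M"
proof (rule opnorm_least)
  fix x assume x: "vnorm S x \<le> 1"
  have "vnorm S (mvec S (\<lambda>a b. c * M a b) x) = cmod c * vnorm S (mvec S M x)"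
    unfolding mvec_scale_mat vnorm_scale ..
  also have "\<dots> \<le> cmod c * opnorm S M"
    by (intro mult_left_mono opnorm_upper S x) simp
  finally show "vnorm S (mvec S (\<lambda>a b. c * M a b) x) \<le> cmod c * opnorm S M" .
qed

lemma opnorm_zero: "finite S \<Longrightarrow> opnorm S (\<lambda>a b. 0) = 0"
  using opnorm_le_sum[of S "\<lambda>a b. 0"] opnorm_nonneg[of S "\<lambda>a b. 0"] by simp

lemma opnorm_heis:
  assumes S: "finite S" and h: "hermitian S H"
  shows "opnorm S (heis S H t X) \<le> opnorm S X"
proof (rule opnorm_least)
  fix x assume x: "vnorm S x \<le> 1"
  let ?U = "mexp S (\<lambda>a b. (\<i> * of_real t) * H a b)"
  let ?V = "mexp S (\<lambda>a b. (- \<i> * of_real t) * H a b)"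
  have "mvec S (heis S H t X) x = mvec S ?U (mvec S X (mvec S ?V x))"
    unfolding heis_def mvec_mmult by simp
  then have "vnorm S (mvec S (heis S H t X) x) = vnorm S (mvec S X (mvec S ?V x))"
    using mexp_unitary[OF S h, of "\<i> * of_real t"] by simp
  also have "\<dots> \<le> opnorm S X * vnorm S (mvec S ?V x)" by (rule opnorm_mvec[OF S])
  also have "\<dots> = opnorm S X * vnorm S x"
    using mexp_unitary[OF S h, of "- \<i> * of_real t"] by simp
  also have "\<dots> \<le> opnorm S X" using x opnorm_nonneg[OF S] by (simp add: mult_left_le)
  finally show "vnorm S (mvec S (heis S H t X) x) \<le> opnorm S X" .
qed

lemma ham_hermitian:
  assumes "local_hamiltonian Lam dd dm Zs HZ R J"
  shows "hermitian (confs Lam dm) (ham_sum Lam dm Zs HZ)"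
  unfolding hermitian_def ham_sum_def
proof (intro ballI)
  fix a b assume ab: "a \<in> confs Lam dm" "b \<in> confs Lam dm"
  have "\<forall>Z\<in>Zs. hermitian (confs Lam dm) (HZ Z)" using assms by (simp add: local_hamiltonian_def)
  then have e: "HZ Z a b = cnj (HZ Z b a)" if "Z \<in> Zs" for Z
    using ab that unfolding hermitian_def by blast
  show "(\<Sum>Z\<in>Zs. HZ Z a b) = cnj (\<Sum>Z\<in>Zs. HZ Z b a)"
    unfolding cnj_sum by (rule sum.cong[OF refl], rule e)
qed

lemma confs_finite:
  assumes "metric_lattice Lam dd dm"
  shows "finite (confs Lam dm)"
proof -
  have fL: "finite Lam" using assms by (simp add: metric_lattice_def)
  let ?E = "(\<lambda>f i. if i \<in> Lam then f i else 0) ` (\<Pi>\<^sub>E i\<in>Lam. {..<dm i})"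
  have "confs Lam dm \<subseteq> ?E"
  proof
    fix \<sigma> assume s: "\<sigma> \<in> confs Lam dm"
    have "restrict \<sigma> Lam \<in> (\<Pi>\<^sub>E i\<in>Lam. {..<dm i})" using s by (auto simp: confs_def)
    moreover have "\<sigma> = (\<lambda>i. if i \<in> Lam then restrict \<sigma> Lam i else 0)"
      using s by (auto simp: confs_def)
    ultimately show "\<sigma> \<in> ?E" by blast
  qed
  moreover have "finite ?E" using fL by (intro finite_imageI finite_PiE) auto
  ultimately show ?thesis by (rule finite_subset)
qed

lemma mexp_cont:
  assumes S: "finite S" and a: "a \<in> S"
  shows "isCont (\<lambda>t::real. mexp S (\<lambda>a b. (w * of_real t) * H a b) a b) t"
proof -
  let ?f = "\<lambda>z. \<Sum>n. (mpow S H n a b / fact n) * z ^ n"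
  have "isCont ?f (w * of_real t)"
    by (rule isCont_powser_converges_everywhere) (rule mexp_summable[OF S a])
  moreover have "isCont (\<lambda>t::real. w * of_real t) t" by (intro continuous_intros)
  ultimately have "isCont (\<lambda>t::real. ?f (w * of_real t)) t"
    by (rule isCont_o2[where f="\<lambda>t. w * of_real t", rotated])
  then show ?thesis unfolding mexp_series .
qed

lemma heis_cont:
  assumes S: "finite S" and a: "a \<in> S"
  shows "continuous_on UNIV (\<lambda>t. heis S H t X a b)"
proof -
  have e: "heis S H t X a b = (\<Sum>c\<in>S. (\<Sum>d\<in>S. mexp S (\<lambda>a b. (\<i> * of_real t) * H a b) a d * X d c)
        * mexp S (\<lambda>a b. (- \<i> * of_real t) * H a b) c b)" for t
    by (simp add: heis_def mmult_def)
  have U: "continuous_on UNIV (\<lambda>t. mexp S (\<lambda>a b. (w * of_real t) * H a b) a' b')" if a': "a' \<in> S" for w a' b'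
    by (rule continuous_at_imp_continuous_on) (simp add: mexp_cont[OF S a'])
  have inner: "continuous_on UNIV (\<lambda>t. (\<Sum>d\<in>S. mexp S (\<lambda>a b. (\<i> * of_real t) * H a b) a d * X d c)
        * mexp S (\<lambda>a b. (- \<i> * of_real t) * H a b) c b)" if c: "c \<in> S" for c
  proof (rule continuous_on_mult)
    show "continuous_on UNIV (\<lambda>t. mexp S (\<lambda>a b. (- \<i> * of_real t) * H a b) c b)" by (rule U[OF c])
    show "continuous_on UNIV (\<lambda>t. \<Sum>d\<in>S. mexp S (\<lambda>a b. (\<i> * of_real t) * H a b) a d * X d c)"
      by (rule continuous_on_sum, rule continuous_on_mult, rule U[OF a], rule continuous_on_const)
  qed
  show ?thesis unfolding e by (rule continuous_on_sum, rule inner)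
qed

lemma heis_measurable:
  assumes S: "finite S" and a: "a \<in> S"
  shows "(\<lambda>t. heis S H t X a b) \<in> borel_measurable borel"
  by (rule borel_measurable_continuous_onI[OF heis_cont[OF assms]])

lemma opnorm_diff_le:
  assumes S: "finite S"
  shows "opnorm S (\<lambda>a b. M a b - N a b) \<le> opnorm S M + opnorm S N"
proof -
  have "opnorm S (\<lambda>a b. M a b - N a b) = opnorm S (\<lambda>a b. M a b + (-1) * N a b)" by simp
  also have "\<dots> \<le> opnorm S M + opnorm S (\<lambda>a b. (-1) * N a b)" by (rule opnorm_add[OF S])
  also have "\<dots> \<le> opnorm S M + opnorm S N"
    using opnorm_scale_le[OF S, of "-1" N] by simp
  finally show ?thesis .
qed

lemma opnorm_rev:
  assumes S: "finite S"
  shows "opnorm S N \<le> opnorm S M + opnorm S (\<lambda>a b. M a b - N a b)"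
proof -
  have "opnorm S N = opnorm S (\<lambda>a b. M a b - (M a b - N a b))" by simp
  also have "\<dots> \<le> opnorm S M + opnorm S (\<lambda>a b. M a b - N a b)" by (rule opnorm_diff_le[OF S])
  finally show ?thesis .
qed

lemma heis_unif:
  assumes S: "finite S" and h: "hermitian S H" and e: "\<epsilon> > 0"
  shows "\<exists>\<delta>>0. \<forall>t\<in>{-T..T}. \<forall>s\<in>{-T..T}. \<bar>t - s\<bar> < \<delta> \<longrightarrow>
           opnorm S (\<lambda>a b. heis S H t X a b - heis S H s X a b) \<le> \<epsilon>"
proof -
  define e1 where "e1 = \<epsilon> / (real (card S) * real (card S) + 1)"
  have "real (card S) * real (card S) + 1 > 0" by (simp add: add_nonneg_pos)
  then have e1: "e1 > 0" using e unfolding e1_def by (intro divide_pos_pos)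
  have ex: "\<forall>p\<in>S \<times> S. \<exists>d>0. \<forall>t\<in>{-T..T}. \<forall>s\<in>{-T..T}. \<bar>t - s\<bar> < d \<longrightarrow>
            cmod (heis S H t X (fst p) (snd p) - heis S H s X (fst p) (snd p)) < e1"
  proof
    fix p assume p: "p \<in> S \<times> S"
    from p have fp: "fst p \<in> S" by (simp add: mem_Times_iff)
    have "uniformly_continuous_on {-T..T} (\<lambda>t. heis S H t X (fst p) (snd p))"
      by (rule compact_uniformly_continuous[OF continuous_on_subset[OF heis_cont[OF S fp] subset_UNIV] compact_Icc])
    then obtain d where "d > 0" and d: "\<And>t s. t \<in> {-T..T} \<Longrightarrow> s \<in> {-T..T} \<Longrightarrow> dist s t < d \<Longrightarrow>
        dist (heis S H s X (fst p) (snd p)) (heis S H t X (fst p) (snd p)) < e1"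
    proof (rule uniformly_continuous_onE[OF _ e1])
      fix \<delta> :: real assume "0 < \<delta>" and hd: "\<And>x x'. x \<in> {-T..T} \<Longrightarrow> x' \<in> {-T..T} \<Longrightarrow> dist x' x < \<delta> \<Longrightarrow>
          dist (heis S H x' X (fst p) (snd p)) (heis S H x X (fst p) (snd p)) < e1"
      show thesis by (rule that[OF \<open>0 < \<delta>\<close> hd])
    qed
    show "\<exists>d>0. \<forall>t\<in>{-T..T}. \<forall>s\<in>{-T..T}. \<bar>t - s\<bar> < d \<longrightarrow>
            cmod (heis S H t X (fst p) (snd p) - heis S H s X (fst p) (snd p)) < e1"
    proof (intro exI[of _ d] conjI \<open>d > 0\<close> ballI impI)
      fix t s assume ts: "t \<in> {-T..T}" "s \<in> {-T..T}" "\<bar>t - s\<bar> < d"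
      have "dist s t = \<bar>t - s\<bar>" unfolding dist_real_def by (rule abs_minus_commute)
      then have "dist s t < d" using ts(3) by simp
      then have "dist (heis S H s X (fst p) (snd p)) (heis S H t X (fst p) (snd p)) < e1"
        by (rule d[OF ts(1,2)])
      moreover have "dist (heis S H s X (fst p) (snd p)) (heis S H t X (fst p) (snd p))
          = cmod (heis S H t X (fst p) (snd p) - heis S H s X (fst p) (snd p))"
        unfolding dist_norm by (rule norm_minus_commute)
      ultimately show "cmod (heis S H t X (fst p) (snd p) - heis S H s X (fst p) (snd p)) < e1"
        by simp
    qed
  qed
  have finSS: "finite (S \<times> S)" using S by simp
  from finite_set_choice[OF finSS ex] obtain df where df: "\<forall>p\<in>S \<times> S. df p > 0 \<and> (\<forall>t\<in>{-T..T}. \<forall>s\<in>{-T..T}. \<bar>t - s\<bar> < df p \<longrightarrow>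
            cmod (heis S H t X (fst p) (snd p) - heis S H s X (fst p) (snd p)) < e1)"
    ..
  define \<delta> where "\<delta> = Min (insert 1 (df ` (S \<times> S)))"
  have fin: "finite (insert 1 (df ` (S \<times> S)))" using S by simp
  have dfpos: "\<And>p. p \<in> S \<times> S \<Longrightarrow> df p > 0" using df by blast
  have dpos: "\<delta> > 0" unfolding \<delta>_def using fin dfpos by (subst Min_gr_iff) auto
  have dle: "\<delta> \<le> df p" if "p \<in> S \<times> S" for p unfolding \<delta>_def using fin that by (intro Min_le) auto
  show ?thesis
  proof (intro exI[of _ \<delta>] conjI dpos ballI impI)
    fix t s assume ts: "t \<in> {-T..T}" "s \<in> {-T..T}" "\<bar>t - s\<bar> < \<delta>"
    have "opnorm S (\<lambda>a b. heis S H t X a b - heis S H s X a b)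
        \<le> (\<Sum>a\<in>S. \<Sum>b\<in>S. cmod (heis S H t X a b - heis S H s X a b))"
      by (rule opnorm_le_sum[OF S])
    also have "\<dots> \<le> (\<Sum>a\<in>S. \<Sum>b\<in>S. e1)"
    proof (intro sum_mono)
      fix a b assume ab: "a \<in> S" "b \<in> S"
      then have ab': "(a, b) \<in> S \<times> S" by simp
      have P: "\<forall>t\<in>{-T..T}. \<forall>s\<in>{-T..T}. \<bar>t - s\<bar> < df (a, b) \<longrightarrow>
            cmod (heis S H t X a b - heis S H s X a b) < e1"
        using conjunct2[OF bspec[OF df ab']] by (simp only: fst_conv snd_conv)
      have "\<bar>t - s\<bar> < df (a, b)" using ts(3) dle[OF ab'] by linarith
      then have "cmod (heis S H t X a b - heis S H s X a b) < e1" using P ts(1,2) by blast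
      then show "cmod (heis S H t X a b - heis S H s X a b) \<le> e1" by simp
    qed
    also have "\<dots> = real (card S) * real (card S) * e1" by simp
    also have "\<dots> \<le> \<epsilon>"
    proof -
      define c where "c = real (card S) * real (card S)"
      have c0: "c \<ge> 0" unfolding c_def by simp
      have "c * e1 = \<epsilon> * (c / (c + 1))" unfolding e1_def c_def by simp
      also have "\<dots> \<le> \<epsilon> * 1" using e c0 by (intro mult_left_mono) auto
      finally show ?thesis unfolding c_def by simp
    qed
    finally show "opnorm S (\<lambda>a b. heis S H t X a b - heis S H s X a b) \<le> \<epsilon>" .
  qed
qed

lemma opnorm_integral:
  fixes F :: "real \<Rightarrow> qop"
  assumes S: "finite S"
    and int: "\<And>a b. a \<in> S \<Longrightarrow> b \<in> S \<Longrightarrow> integrable lborel (\<lambda>t. F t a b)"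
    and hint: "integrable lborel h"
    and bnd: "\<And>t. opnorm S (F t) \<le> h t"
  shows "opnorm S (\<lambda>a b. LINT t|lborel. F t a b) \<le> (LINT t|lborel. h t)"
proof (rule opnorm_least)
  fix x assume x: "vnorm S x \<le> 1"
  define Y where "Y = (\<lambda>a b. LINT t|lborel. F t a b)"
  define y where "y = mvec S Y x"
  define N where "N = vnorm S y"
  have N0: "N \<ge> 0" unfolding N_def by (rule vnorm_nonneg)
  have h0: "0 \<le> h t" for t using bnd[of t] opnorm_nonneg[OF S, of "F t"] by linarith
  have ya: "y a = (LINT t|lborel. mvec S (F t) x a)" if a: "a \<in> S" for a
  proof -
    have "y a = (\<Sum>b\<in>S. (LINT t|lborel. F t a b) * x b)" by (simp add: y_def Y_def mvec_def)
    also have "\<dots> = (\<Sum>b\<in>S. (LINT t|lborel. F t a b * x b))" by simp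
    also have "\<dots> = (LINT t|lborel. (\<Sum>b\<in>S. F t a b * x b))"
      using Bochner_Integration.integral_sum[where I=S and f="\<lambda>b t. F t a b * x b"] int a by auto
    finally show ?thesis by (simp add: mvec_def)
  qed
  define \<psi> where "\<psi> t = (\<Sum>a\<in>S. cnj (y a) * mvec S (F t) x a)" for t
  have intv: "integrable lborel (\<lambda>t. mvec S (F t) x a)" if "a \<in> S" for a
  proof -
    have "\<And>b. b \<in> S \<Longrightarrow> integrable lborel (\<lambda>t. F t a b * x b)" using int that by auto
    then have "integrable lborel (\<lambda>t. \<Sum>b\<in>S. F t a b * x b)" by (rule Bochner_Integration.integrable_sum)
    then show ?thesis unfolding mvec_def .
  qed
  have psi_int: "integrable lborel \<psi>"
  proof -
    have "\<And>a. a \<in> S \<Longrightarrow> integrable lborel (\<lambda>t. cnj (y a) * mvec S (F t) x a)" using intv by auto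
    then have "integrable lborel (\<lambda>t. \<Sum>a\<in>S. cnj (y a) * mvec S (F t) x a)" by (rule Bochner_Integration.integrable_sum)
    then show ?thesis unfolding \<psi>_def[abs_def] .
  qed
  have "(LINT t|lborel. \<psi> t) = (\<Sum>a\<in>S. cnj (y a) * (LINT t|lborel. mvec S (F t) x a))"
    unfolding \<psi>_def by (subst Bochner_Integration.integral_sum) (use intv in auto)
  also have "\<dots> = (\<Sum>a\<in>S. cnj (y a) * y a)" using ya by simp
  also have "\<dots> = complex_of_real (N\<^sup>2)" unfolding N_def by (rule vnorm_sq_complex[symmetric])
  finally have eqN: "(LINT t|lborel. \<psi> t) = complex_of_real (N\<^sup>2)" .
  have psi_bnd: "cmod (\<psi> t) \<le> N * h t" for t
  proof -
    have "cmod (\<psi> t) \<le> (\<Sum>a\<in>S. cmod (y a) * cmod (mvec S (F t) x a))"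
      unfolding \<psi>_def by (rule order_trans[OF norm_sum]) (simp add: norm_mult)
    also have "\<dots> = (\<Sum>a\<in>S. \<bar>cmod (y a)\<bar> * \<bar>cmod (mvec S (F t) x a)\<bar>)" by simp
    also have "\<dots> \<le> N * vnorm S (mvec S (F t) x)"
      unfolding N_def vnorm_L2 by (rule L2_set_mult_ineq)
    also have "\<dots> \<le> N * (opnorm S (F t) * vnorm S x)"
      by (rule mult_left_mono[OF opnorm_mvec[OF S] N0])
    also have "\<dots> \<le> N * h t"
    proof (rule mult_left_mono[OF _ N0])
      have "opnorm S (F t) * vnorm S x \<le> opnorm S (F t)"
        using x opnorm_nonneg[OF S] by (simp add: mult_left_le)
      then show "opnorm S (F t) * vnorm S x \<le> h t" using bnd[of t] by linarith
    qed
    finally show ?thesis .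
  qed
  have "N\<^sup>2 = Re (LINT t|lborel. \<psi> t)" using eqN by simp
  also have "\<dots> \<le> cmod (LINT t|lborel. \<psi> t)" by (rule complex_Re_le_cmod)
  also have "\<dots> \<le> (LINT t|lborel. cmod (\<psi> t))" by (rule integral_norm_bound)
  also have "\<dots> \<le> (LINT t|lborel. N * h t)"
    by (rule integral_mono) (use psi_int hint psi_bnd in auto)
  also have "\<dots> = N * (LINT t|lborel. h t)" by simp
  finally have NN: "N\<^sup>2 \<le> N * (LINT t|lborel. h t)" .
  have Ih: "0 \<le> (LINT t|lborel. h t)" by (rule Bochner_Integration.integral_nonneg) (use h0 in auto)
  show "vnorm S (mvec S (\<lambda>a b. LINT t|lborel. F t a b) x) \<le> (LINT t|lborel. h t)"
  proof (cases "N = 0")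
    case True then show ?thesis using Ih unfolding N_def y_def Y_def by simp
  next
    case False
    then have "N > 0" using N0 by simp
    then have "N \<le> (LINT t|lborel. h t)" using NN by (simp add: power2_eq_square)
    then show ?thesis unfolding N_def y_def Y_def .
  qed
qed

lemma sin_diff_exp: "exp (\<i> * complex_of_real th) - exp (- (\<i> * complex_of_real th)) = 2 * \<i> * complex_of_real (sin th)"
proof -
  have "exp (- (\<i> * complex_of_real th)) = exp (\<i> * complex_of_real (- th))" by simp
  then show ?thesis
    by (simp only: cis_conv_exp[symmetric]) (simp add: complex_eq_iff)
qed

lemma fq_bound:
  assumes q: "q > 0"
  shows "cmod (fq q s) \<le> 3/2 * exp (- s\<^sup>2 / (2 * q))"
proof (cases "s = 0")
  case True then show ?thesis by (simp add: fq_def)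
next
  case False
  have "cmod (fq q s) = exp (- s\<^sup>2 / (2 * q)) * (2 * \<bar>sin (3 * s / 4)\<bar>) / \<bar>s\<bar>"
    unfolding fq_def sin_diff_exp by (simp add: norm_mult norm_divide)
  also have "\<dots> \<le> exp (- s\<^sup>2 / (2 * q)) * (2 * \<bar>3 * s / 4\<bar>) / \<bar>s\<bar>"
  proof -
    have "\<bar>sin (3 * s / 4)\<bar> \<le> \<bar>3 * s / 4\<bar>" by (rule abs_sin_x_le_abs_x)
    then show ?thesis by (intro divide_right_mono mult_left_mono) auto
  qed
  also have "\<dots> = 3/2 * exp (- s\<^sup>2 / (2 * q))" using False by (simp add: abs_mult)
  finally show ?thesis .
qed

lemma fq_measurable: "(\<lambda>t. fq q (\<gamma> * t)) \<in> borel_measurable borel"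
  unfolding fq_def by measurable

lemma exp_tendsto0: "(\<kappa>::real) > 0 \<Longrightarrow> ((\<lambda>t::real. exp (- (\<kappa> * t\<^sup>2))) \<longlongrightarrow> 0) at_top"
proof -
  assume k: "\<kappa> > 0"
  have "filterlim (\<lambda>t::real. t ^ 2) at_top at_top" by (intro filterlim_pow_at_top filterlim_ident) auto
  then have "filterlim (\<lambda>t::real. \<kappa> * t ^ 2) at_top at_top"
    by (intro filterlim_tendsto_pos_mult_at_top[OF tendsto_const k])
  then have "filterlim (\<lambda>t::real. - (\<kappa> * t ^ 2)) at_bot at_top"
    by (simp add: filterlim_uminus_at_bot)
  then show ?thesis by (rule filterlim_compose[OF exp_at_bot])
qed

lemma gauss_tail_nn:
  fixes \<kappa> c :: real
  assumes k: "\<kappa> > 0" and c: "c > 0"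
  shows "(\<integral>\<^sup>+t. ennreal (exp (- (\<kappa> * t\<^sup>2))) * indicator {c..} t \<partial>lborel) \<le> ennreal (exp (- (\<kappa> * c\<^sup>2)) / (2 * \<kappa> * c))"
proof -
  have "(\<integral>\<^sup>+t. ennreal (exp (- (\<kappa> * t\<^sup>2))) * indicator {c..} t \<partial>lborel)
      \<le> (\<integral>\<^sup>+t. ennreal (t / c * exp (- (\<kappa> * t\<^sup>2))) * indicator {c..} t \<partial>lborel)"
  proof (rule nn_integral_mono)
    fix t
    show "ennreal (exp (- (\<kappa> * t\<^sup>2))) * indicator {c..} t \<le> ennreal (t / c * exp (- (\<kappa> * t\<^sup>2))) * indicator {c..} t"
    proof (cases "c \<le> t")
      case True
      then have "1 \<le> t / c" using c by simp
      then have "exp (- (\<kappa> * t\<^sup>2)) * 1 \<le> exp (- (\<kappa> * t\<^sup>2)) * (t / c)"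
        by (intro mult_left_mono) auto
      then have "exp (- (\<kappa> * t\<^sup>2)) \<le> t / c * exp (- (\<kappa> * t\<^sup>2))"
        by (simp add: mult.commute)
      then show ?thesis using True by (simp add: ennreal_leI)
    qed simp
  qed
  also have "\<dots> = 0 - (- exp (- (\<kappa> * c\<^sup>2)) / (2 * \<kappa> * c))"
  proof (rule nn_integral_FTC_atLeast[where F="\<lambda>t. - exp (- (\<kappa> * t\<^sup>2)) / (2 * \<kappa> * c)" and T=0])
    show "(\<lambda>t. t / c * exp (- (\<kappa> * t\<^sup>2))) \<in> borel_measurable borel" by measurable
    show "DERIV (\<lambda>t. - exp (- (\<kappa> * t\<^sup>2)) / (2 * \<kappa> * c)) x :> x / c * exp (- (\<kappa> * x\<^sup>2))" if "c \<le> x" for x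
      using k c by (auto intro!: derivative_eq_intros simp: field_simps power2_eq_square)
    show "0 \<le> x / c * exp (- (\<kappa> * x\<^sup>2))" if "c \<le> x" for x using that c by simp
    show "((\<lambda>t. - exp (- (\<kappa> * t\<^sup>2)) / (2 * \<kappa> * c)) \<longlongrightarrow> 0) at_top"
      using tendsto_divide[OF tendsto_minus[OF exp_tendsto0[OF k]] tendsto_const[of "2 * \<kappa> * c"]] k c by simp
  qed
  also have "\<dots> = exp (- (\<kappa> * c\<^sup>2)) / (2 * \<kappa> * c)" by simp
  finally show ?thesis .
qed

lemma gauss_tail_nn2:
  fixes \<kappa> c :: real
  assumes k: "\<kappa> > 0" and c: "c > 0"
  shows "(\<integral>\<^sup>+t. ennreal (exp (- (\<kappa> * t\<^sup>2))) * indicator {..-c} t \<partial>lborel) \<le> ennreal (exp (- (\<kappa> * c\<^sup>2)) / (2 * \<kappa> * c))"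
proof -
  have "(\<integral>\<^sup>+t. ennreal (exp (- (\<kappa> * t\<^sup>2))) * indicator {..-c} t \<partial>lborel)
     = (\<integral>\<^sup>+t. ennreal (exp (- (\<kappa> * t\<^sup>2))) * indicator {c..} t \<partial>lborel)"
    by (subst nn_integral_real_affine[where c="-1" and t=0]) (auto intro!: nn_integral_cong split: split_indicator)
  then show ?thesis using gauss_tail_nn[OF k c] by simp
qed

lemma nn_to_int:
  fixes f :: "real \<Rightarrow> real"
  assumes m: "f \<in> borel_measurable borel" and nn: "\<And>t. 0 \<le> f t"
    and B: "(\<integral>\<^sup>+t. ennreal (f t) \<partial>lborel) \<le> ennreal B" and B0: "0 \<le> B"
  shows "integrable lborel f \<and> integral\<^sup>L lborel f \<le> B"
proof -
  have "(\<integral>\<^sup>+t. ennreal (norm (f t)) \<partial>lborel) = (\<integral>\<^sup>+t. ennreal (f t) \<partial>lborel)"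
    using nn by simp
  then have "(\<integral>\<^sup>+t. ennreal (norm (f t)) \<partial>lborel) < \<infinity>" using B by (simp add: le_less_trans)
  then have i: "integrable lborel f" using m by (intro integrableI_bounded) auto
  then have "(\<integral>\<^sup>+t. ennreal (f t) \<partial>lborel) = ennreal (integral\<^sup>L lborel f)"
    by (rule nn_integral_eq_integral) (simp add: nn)
  then have "ennreal (integral\<^sup>L lborel f) \<le> ennreal B" using B by simp
  then show ?thesis using i B0 by simp
qed

lemma gauss_total:
  fixes \<kappa> c :: real
  assumes k: "\<kappa> > 0" and c: "c > 0"
  shows "integrable lborel (\<lambda>t. exp (- (\<kappa> * t\<^sup>2))) \<and>
         (LINT t|lborel. exp (- (\<kappa> * t\<^sup>2))) \<le> 2 * c + exp (- (\<kappa> * c\<^sup>2)) / (\<kappa> * c)"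
proof (rule nn_to_int)
  let ?E = "\<lambda>t. exp (- (\<kappa> * t\<^sup>2))"
  show "?E \<in> borel_measurable borel" by measurable
  show "0 \<le> ?E t" for t by simp
  show "0 \<le> 2 * c + exp (- (\<kappa> * c\<^sup>2)) / (\<kappa> * c)" using k c by simp
  have "(\<integral>\<^sup>+t. ennreal (?E t) \<partial>lborel) \<le> (\<integral>\<^sup>+t. indicator {-c..c} t +
        (ennreal (?E t) * indicator {c..} t + ennreal (?E t) * indicator {..-c} t) \<partial>lborel)"
  proof (rule nn_integral_mono)
    fix t
    show "ennreal (?E t) \<le> indicator {-c..c} t + (ennreal (?E t) * indicator {c..} t + ennreal (?E t) * indicator {..-c} t)"
    proof (cases "-c \<le> t \<and> t \<le> c")
      case True
      have "?E t \<le> 1" using k by simp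
      then have "ennreal (?E t) \<le> 1" by (simp add: ennreal_le_1)
      then show ?thesis using True by (simp add: add_increasing2)
    next
      case False
      then have "c \<le> t \<or> t \<le> -c" by auto
      then show ?thesis by (auto split: split_indicator)
    qed
  qed
  also have "\<dots> = (\<integral>\<^sup>+t. indicator {-c..c} t \<partial>lborel) + ((\<integral>\<^sup>+t. ennreal (?E t) * indicator {c..} t \<partial>lborel)
        + (\<integral>\<^sup>+t. ennreal (?E t) * indicator {..-c} t \<partial>lborel))"
    by (simp add: nn_integral_add)
  also have "\<dots> \<le> ennreal (2 * c) + (ennreal (exp (- (\<kappa> * c\<^sup>2)) / (2 * \<kappa> * c)) + ennreal (exp (- (\<kappa> * c\<^sup>2)) / (2 * \<kappa> * c)))"
    using c by (intro add_mono gauss_tail_nn[OF k c] gauss_tail_nn2[OF k c]) simp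
  also have "\<dots> = ennreal (2 * c + exp (- (\<kappa> * c\<^sup>2)) / (\<kappa> * c))"
    using k c by (simp add: ennreal_plus[symmetric] del: ennreal_plus)
  finally show "(\<integral>\<^sup>+t. ennreal (?E t) \<partial>lborel) \<le> ennreal (2 * c + exp (- (\<kappa> * c\<^sup>2)) / (\<kappa> * c))" .
qed

lemma gauss_tails:
  fixes \<kappa> c :: real
  assumes k: "\<kappa> > 0" and c: "c > 0"
  shows "integrable lborel (\<lambda>t. exp (- (\<kappa> * t\<^sup>2)) * indicator {t. c < \<bar>t\<bar>} t) \<and>
         (LINT t|lborel. exp (- (\<kappa> * t\<^sup>2)) * indicator {t. c < \<bar>t\<bar>} t) \<le> exp (- (\<kappa> * c\<^sup>2)) / (\<kappa> * c)"
proof (rule nn_to_int)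
  let ?E = "\<lambda>t. exp (- (\<kappa> * t\<^sup>2))"
  show "(\<lambda>t. ?E t * indicator {t. c < \<bar>t\<bar>} t) \<in> borel_measurable borel" by measurable
  show "0 \<le> ?E t * indicator {t. c < \<bar>t\<bar>} t" for t by simp
  show "0 \<le> exp (- (\<kappa> * c\<^sup>2)) / (\<kappa> * c)" using k c by simp
  have "(\<integral>\<^sup>+t. ennreal (?E t * indicator {t. c < \<bar>t\<bar>} t) \<partial>lborel) \<le> (\<integral>\<^sup>+t.
        (ennreal (?E t) * indicator {c..} t + ennreal (?E t) * indicator {..-c} t) \<partial>lborel)"
    by (rule nn_integral_mono) (auto split: split_indicator)
  also have "\<dots> = ((\<integral>\<^sup>+t. ennreal (?E t) * indicator {c..} t \<partial>lborel)
        + (\<integral>\<^sup>+t. ennreal (?E t) * indicator {..-c} t \<partial>lborel))"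
    by (simp add: nn_integral_add)
  also have "\<dots> \<le> (ennreal (exp (- (\<kappa> * c\<^sup>2)) / (2 * \<kappa> * c)) + ennreal (exp (- (\<kappa> * c\<^sup>2)) / (2 * \<kappa> * c)))"
    by (intro add_mono gauss_tail_nn[OF k c] gauss_tail_nn2[OF k c])
  also have "\<dots> = ennreal (exp (- (\<kappa> * c\<^sup>2)) / (\<kappa> * c))"
    using k c by (simp add: ennreal_plus[symmetric] del: ennreal_plus)
  finally show "(\<integral>\<^sup>+t. ennreal (?E t * indicator {t. c < \<bar>t\<bar>} t) \<partial>lborel) \<le> ennreal (exp (- (\<kappa> * c\<^sup>2)) / (\<kappa> * c))" .
qed

lemma kk_measurable:
  fixes st T :: real
  shows "(\<lambda>t. Xs (nat \<lfloor>(t + T) / st\<rfloor>) a b :: complex) \<in> borel_measurable borel"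
proof -
  have g: "(\<lambda>t::real. nat \<lfloor>(t + T) / st\<rfloor>) \<in> measurable borel (count_space UNIV)" by measurable
  show ?thesis
    by (rule measurable_compose_countable[where f="\<lambda>k t. Xs k a b", OF _ g]) simp
qed

theorem corollary1:
  shows "\<exists>C::real. \<forall>(Lam::nat set) (dd::nat \<Rightarrow> nat \<Rightarrow> real) (dm::nat \<Rightarrow> nat)
      (Zs::nat set set) (HZ::nat set \<Rightarrow> qop) (R::real) (J::real) (v::real) (g::real \<Rightarrow> real)
      (\<gamma>::real) (q::real) (A::nat set) (X::qop) (l::real).
    metric_lattice Lam dd dm \<and> R > 0 \<and> local_hamiltonian Lam dd dm Zs HZ R J \<and>
    v > 0 \<and> faster_than_exp g R \<and>
    lieb_robinson_bound Lam dd dm (ham_sum Lam dm Zs HZ) v g \<and>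
    \<gamma> > 0 \<and> q > 0 \<and> A \<subseteq> Lam \<and> supported_on Lam dm A X \<and> l > 0
    \<longrightarrow> (\<exists>W'. supported_on Lam dm (bnbhd Lam dd l A) W' \<and>
          opnorm (confs Lam dm)
            (mdiff (Wfilt (confs Lam dm) (ham_sum Lam dm Zs HZ) \<gamma> (fq q) X) W')
          \<le> (C * q / (l * \<gamma> / v) * exp (- (l * \<gamma> / v)\<^sup>2 / (2 * q))
              + C * sqrt q * g l * real (card A)) * opnorm (confs Lam dm) X)"
proof (intro exI[of _ 6] allI impI)
  fix Lam :: "nat set" and dd :: "nat \<Rightarrow> nat \<Rightarrow> real" and dm :: "nat \<Rightarrow> nat"
    and Zs :: "nat set set" and HZ :: "nat set \<Rightarrow> qop" and R J v :: real and g :: "real \<Rightarrow> real"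
    and \<gamma> q :: real and A :: "nat set" and X :: qop and l :: real
  assume hyp: "metric_lattice Lam dd dm \<and> R > 0 \<and> local_hamiltonian Lam dd dm Zs HZ R J \<and>
    v > 0 \<and> faster_than_exp g R \<and>
    lieb_robinson_bound Lam dd dm (ham_sum Lam dm Zs HZ) v g \<and>
    \<gamma> > 0 \<and> q > 0 \<and> A \<subseteq> Lam \<and> supported_on Lam dm A X \<and> l > 0"
  have ml: "metric_lattice Lam dd dm" using hyp by blast
  have lh: "local_hamiltonian Lam dd dm Zs HZ R J" using hyp by blast
  have v: "v > 0" using hyp by blast
  have lrb: "lieb_robinson_bound Lam dd dm (ham_sum Lam dm Zs HZ) v g" using hyp by blast
  have \<gamma>: "\<gamma> > 0" using hyp by blast
  have q: "q > 0" using hyp by blast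
  have AL: "A \<subseteq> Lam" using hyp by blast
  have Xs_A: "supported_on Lam dm A X" using hyp by blast
  have l: "l > 0" using hyp by blast
  define S where "S = confs Lam dm"
  define H where "H = ham_sum Lam dm Zs HZ"
  define B where "B = bnbhd Lam dd l A"
  define T where "T = l / v"
  define L where "L = l * \<gamma> / v"
  define nX where "nX = opnorm S X"
  define G where "G = g l * real (card A) * nX"
  have S: "finite S" unfolding S_def by (rule confs_finite[OF ml])
  have h: "hermitian S H" unfolding S_def H_def by (rule ham_hermitian[OF lh])
  have nX0: "0 \<le> nX" unfolding nX_def by (rule opnorm_nonneg[OF S])
  have T0: "T > 0" unfolding T_def using l v by simp
  have LT: "L = \<gamma> * T" unfolding L_def T_def by simp
  have L0: "L > 0" unfolding LT using \<gamma> T0 by simp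
  have LR: "\<exists>X'. supported_on Lam dm B X' \<and>
      opnorm S (\<lambda>a b. heis S H t X a b - X' a b) \<le> (v * \<bar>t\<bar> / l) * G" if t: "\<bar>t\<bar> \<le> T" for t
  proof -
    have "\<exists>X'. supported_on Lam dm (bnbhd Lam dd l A) X' \<and>
          opnorm (confs Lam dm) (mdiff (heis (confs Lam dm) (ham_sum Lam dm Zs HZ) t X) X')
            \<le> v * \<bar>t\<bar> / l * g l * real (card A) * opnorm (confs Lam dm) X"
      using lrb AL Xs_A l t unfolding lieb_robinson_bound_def T_def by blast
    then show ?thesis unfolding S_def[symmetric] H_def[symmetric] B_def[symmetric] nX_def[symmetric]
        mdiff_def G_def by (simp add: mult.assoc)
  qed
  have G0: "0 \<le> G"
  proof -
    obtain X' where "opnorm S (\<lambda>a b. heis S H T X a b - X' a b) \<le> (v * \<bar>T\<bar> / l) * G"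
      using LR[of T] T0 by auto
    moreover have "v * \<bar>T\<bar> / l = 1" using T0 v l unfolding T_def by simp
    ultimately show ?thesis using opnorm_nonneg[OF S] by (metis mult_1 order_trans)
  qed
  have LRk: "\<exists>X'. supported_on Lam dm B X' \<and>
      opnorm S (\<lambda>a b. heis S H t X a b - X' a b) \<le> G" if t: "\<bar>t\<bar> \<le> T" for t
  proof -
    obtain X' where X': "supported_on Lam dm B X'"
      "opnorm S (\<lambda>a b. heis S H t X a b - X' a b) \<le> (v * \<bar>t\<bar> / l) * G"
      using LR[OF t] by blast
    have "v * \<bar>t\<bar> / l \<le> 1" using t v l unfolding T_def by (simp add: field_simps)
    then have "(v * \<bar>t\<bar> / l) * G \<le> 1 * G" using G0 by (rule mult_right_mono)
    then show ?thesis using X' by auto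
  qed
  define \<epsilon>0 where "\<epsilon>0 = q / L * exp (- L\<^sup>2 / (2 * q)) * nX / (2 * sqrt q)"
  have e0: "0 \<le> \<epsilon>0" unfolding \<epsilon>0_def using q L0 nX0 by simp
  obtain \<delta> where \<delta>: "\<delta> > 0" and dlt: "\<And>t s. t \<in> {-T..T} \<Longrightarrow> s \<in> {-T..T} \<Longrightarrow> \<bar>t - s\<bar> < \<delta> \<Longrightarrow>
      opnorm S (\<lambda>a b. heis S H t X a b - heis S H s X a b) \<le> \<epsilon>0"
  proof (cases "\<epsilon>0 > 0")
    case True
    then show ?thesis using heis_unif[OF S h True, of T X] that by blast
  next
    case False
    then have "\<epsilon>0 = 0" using e0 by simp
    then have "nX = 0" unfolding \<epsilon>0_def using q L0 by simp
    have "opnorm S (\<lambda>a b. heis S H t X a b - heis S H s X a b) \<le> \<epsilon>0" for t s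
    proof -
      have "opnorm S (\<lambda>a b. heis S H t X a b - heis S H s X a b) \<le> opnorm S (heis S H t X) + opnorm S (heis S H s X)"
        by (rule opnorm_diff_le[OF S])
      also have "\<dots> \<le> nX + nX" unfolding nX_def by (intro add_mono opnorm_heis[OF S h])
      finally show ?thesis using \<open>nX = 0\<close> \<open>\<epsilon>0 = 0\<close> by simp
    qed
    then show ?thesis using that[of 1] by simp
  qed
  define N :: nat where "N = nat \<lceil>2 * T / \<delta>\<rceil> + 1"
  define st where "st = 2 * T / real N"
  have N0: "real N > 2 * T / \<delta>"
  proof -
    have "2 * T / \<delta> \<le> real (nat \<lceil>2 * T / \<delta>\<rceil>)" by linarith
    then show ?thesis unfolding N_def by simp
  qed
  have Npos: "real N > 0" unfolding N_def by simp
  have st0: "st > 0" unfolding st_def using T0 Npos by simp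
  have st\<delta>: "st < \<delta>" unfolding st_def using N0 \<delta> Npos by (simp add: field_simps)
  have NT: "real N * st = 2 * T" unfolding st_def using Npos by simp
  define tk where "tk k = - T + real (min k N) * st" for k
  define kk where "kk t = nat \<lfloor>(t + T) / st\<rfloor>" for t
  have tk_range: "tk k \<in> {-T..T}" for k
  proof -
    have "real (min k N) * st \<le> real N * st" using st0 by (intro mult_right_mono) auto
    then show ?thesis unfolding tk_def using NT st0 by auto
  qed
  have kk_prop: "\<bar>t - tk (kk t)\<bar> < \<delta>" if t: "t \<in> {-T..T}" for t
  proof -
    define x where "x = (t + T) / st"
    have x0: "0 \<le> x" unfolding x_def using t st0 by simp
    have xN: "x \<le> real N" unfolding x_def using t st0 NT by (simp add: field_simps)
    have fl: "real (kk t) = of_int \<lfloor>x\<rfloor>" unfolding kk_def x_def[symmetric] using x0 by simp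
    have kN: "kk t \<le> N" using fl xN by linarith
    have e1: "tk (kk t) = - T + of_int \<lfloor>x\<rfloor> * st" unfolding tk_def using kN fl by simp
    have e2: "t = - T + x * st" unfolding x_def using st0 by simp
    have "t - tk (kk t) = x * st - of_int \<lfloor>x\<rfloor> * st" using e1 e2 by linarith
    also have "\<dots> = (x - of_int \<lfloor>x\<rfloor>) * st" by (simp add: algebra_simps)
    finally have "t - tk (kk t) = (x - of_int \<lfloor>x\<rfloor>) * st" .
    moreover have "0 \<le> x - of_int \<lfloor>x\<rfloor>" "x - of_int \<lfloor>x\<rfloor> < 1" by linarith+
    ultimately have "\<bar>t - tk (kk t)\<bar> < st" using st0
      by (simp add: abs_mult)
    then show ?thesis using st\<delta> by simp
  qed
  have "\<forall>k. \<exists>X'. supported_on Lam dm B X' \<and> opnorm S (\<lambda>a b. heis S H (tk k) X a b - X' a b) \<le> G"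
    using LRk tk_range by (metis abs_le_iff atLeastAtMost_iff minus_le_iff)
  then obtain Xs where Xs: "\<And>k. supported_on Lam dm B (Xs k)"
    "\<And>k. opnorm S (\<lambda>a b. heis S H (tk k) X a b - Xs k a b) \<le> G"
    by metis
  define ind where "ind t = (indicator {-T..T} t :: real)" for t
  define W' where "W' = (\<lambda>a b. complex_of_real \<gamma> *
      (LINT t|lborel. fq q (\<gamma> * t) * (complex_of_real (ind t) * Xs (kk t) a b)))"
  have sup: "supported_on Lam dm B W'"
    unfolding supported_on_def
  proof (intro conjI ballI impI)
    fix \<sigma> \<tau> assume st: "\<sigma> \<in> confs Lam dm" "\<tau> \<in> confs Lam dm" "\<exists>i\<in>Lam - B. \<sigma> i \<noteq> \<tau> i"
    have "Xs k \<sigma> \<tau> = 0" for k using Xs(1)[of k] st unfolding supported_on_def by blast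
    then show "W' \<sigma> \<tau> = 0" unfolding W'_def by simp
  next
    fix \<sigma> \<tau> \<sigma>' \<tau>' assume st: "\<sigma> \<in> confs Lam dm" "\<tau> \<in> confs Lam dm" "\<sigma>' \<in> confs Lam dm" "\<tau>' \<in> confs Lam dm"
      "(\<forall>i\<in>B. \<sigma> i = \<sigma>' i \<and> \<tau> i = \<tau>' i) \<and> (\<forall>i\<in>Lam - B. \<sigma> i = \<tau> i \<and> \<sigma>' i = \<tau>' i)"
    have "Xs k \<sigma> \<tau> = Xs k \<sigma>' \<tau>'" for k using Xs(1)[of k] st unfolding supported_on_def by blast
    then show "W' \<sigma> \<tau> = W' \<sigma>' \<tau>'" unfolding W'_def by simp
  qed
  define \<kappa> where "\<kappa> = \<gamma>\<^sup>2 / (2 * q)"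
  have \<kappa>0: "\<kappa> > 0" unfolding \<kappa>_def using \<gamma> q by simp
  define E where "E t = exp (- (\<kappa> * t\<^sup>2))" for t
  have fqb: "cmod (fq q (\<gamma> * t)) \<le> 3/2 * E t" for t
  proof -
    have "- (\<gamma> * t)\<^sup>2 / (2 * q) = - (\<kappa> * t\<^sup>2)" unfolding \<kappa>_def using q by (simp add: power_mult_distrib)
    then show ?thesis using fq_bound[OF q, of "\<gamma> * t"] unfolding E_def by simp
  qed
  have sq: "sqrt q * sqrt q = q" using q by simp
  have sq0: "sqrt q > 0" using q by simp
  define c0 where "c0 = sqrt q / \<gamma>"
  have c0: "c0 > 0" unfolding c0_def using sq0 \<gamma> by simp
  have gt: "integrable lborel E \<and> (LINT t|lborel. E t) \<le> 2 * c0 + exp (- (\<kappa> * c0\<^sup>2)) / (\<kappa> * c0)"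
    unfolding E_def by (rule gauss_total[OF \<kappa>0 c0])
  have Eint: "integrable lborel E" using gt by blast
  have kc0: "\<kappa> * c0 = \<gamma> / (2 * sqrt q)" unfolding \<kappa>_def c0_def using q \<gamma> sq0
    by (simp add: field_simps power2_eq_square)
  have IE: "(LINT t|lborel. E t) \<le> 4 * sqrt q / \<gamma>"
  proof -
    have "exp (- (\<kappa> * c0\<^sup>2)) \<le> 1" using \<kappa>0 by simp
    then have "exp (- (\<kappa> * c0\<^sup>2)) / (\<kappa> * c0) \<le> 1 / (\<kappa> * c0)"
      using \<kappa>0 c0 by (intro divide_right_mono) auto
    also have "\<dots> = 2 * sqrt q / \<gamma>" unfolding kc0 by simp
    finally have "exp (- (\<kappa> * c0\<^sup>2)) / (\<kappa> * c0) \<le> 2 * sqrt q / \<gamma>" .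
    then show ?thesis using gt unfolding c0_def by simp
  qed
  have gtl: "integrable lborel (\<lambda>t. E t * indicator {t. T < \<bar>t\<bar>} t) \<and>
         (LINT t|lborel. E t * indicator {t. T < \<bar>t\<bar>} t) \<le> exp (- (\<kappa> * T\<^sup>2)) / (\<kappa> * T)"
    unfolding E_def by (rule gauss_tails[OF \<kappa>0 T0])
  have Etint: "integrable lborel (\<lambda>t. E t * indicator {t. T < \<bar>t\<bar>} t)" using gtl by blast
  have kT: "\<kappa> * T\<^sup>2 = L\<^sup>2 / (2 * q)" unfolding \<kappa>_def LT by (simp add: power_mult_distrib)
  have kT2: "\<kappa> * T = \<gamma> * L / (2 * q)" unfolding \<kappa>_def LT by (simp add: power2_eq_square)
  have IEt: "(LINT t|lborel. E t * indicator {t. T < \<bar>t\<bar>} t) \<le> 2 * q * exp (- L\<^sup>2 / (2 * q)) / (\<gamma> * L)"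
    using gtl unfolding kT kT2 using q \<gamma> L0 by (simp add: field_simps)
  have E0: "0 \<le> E t" for t unfolding E_def by simp
  have heb: "cmod (heis S H t X a b) \<le> nX" if ab: "a \<in> S" "b \<in> S" for t a b
    using opnorm_entry[OF S ab, of "heis S H t X"] opnorm_heis[OF S h, of t X] unfolding nX_def by linarith
  have Xsb: "cmod (Xs k a b) \<le> nX + G" if ab: "a \<in> S" "b \<in> S" for k a b
  proof -
    have "cmod (Xs k a b) \<le> opnorm S (Xs k)" by (rule opnorm_entry[OF S ab])
    also have "\<dots> \<le> opnorm S (heis S H (tk k) X) + opnorm S (\<lambda>a b. heis S H (tk k) X a b - Xs k a b)"
      by (rule opnorm_rev[OF S])
    also have "\<dots> \<le> nX + G" unfolding nX_def using opnorm_heis[OF S h] Xs(2) by (intro add_mono)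
    finally show ?thesis .
  qed
  have ind01: "0 \<le> ind t \<and> ind t \<le> 1" for t unfolding ind_def by (simp split: split_indicator)
  have fqm[measurable]: "(\<lambda>t. fq q (\<gamma> * t)) \<in> borel_measurable borel" by (rule fq_measurable)
  have indm[measurable]: "ind \<in> borel_measurable borel" unfolding ind_def by measurable
  have i1: "integrable lborel (\<lambda>t. fq q (\<gamma> * t) * heis S H t X a b)" if ab: "a \<in> S" "b \<in> S" for a b
  proof (rule Bochner_Integration.integrable_bound[where f="\<lambda>t. 3/2 * nX * E t"])
    show "integrable lborel (\<lambda>t. 3/2 * nX * E t)" by (intro Bochner_Integration.integrable_mult_right Eint)
    have [measurable]: "(\<lambda>t. heis S H t X a b) \<in> borel_measurable borel" by (rule heis_measurable[OF S ab(1)])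
    show "(\<lambda>t. fq q (\<gamma> * t) * heis S H t X a b) \<in> borel_measurable lborel" by measurable
    show "AE t in lborel. norm (fq q (\<gamma> * t) * heis S H t X a b) \<le> norm (3/2 * nX * E t)"
    proof (rule AE_I2)
      fix t
      have "norm (fq q (\<gamma> * t) * heis S H t X a b) \<le> (3/2 * E t) * nX"
        unfolding norm_mult by (intro mult_mono fqb heb[OF ab] norm_ge_zero) (simp add: E0)
      then show "norm (fq q (\<gamma> * t) * heis S H t X a b) \<le> norm (3/2 * nX * E t)"
        using nX0 E0[of t] by (simp add: mult_ac)
    qed
  qed
  have i2: "integrable lborel (\<lambda>t. fq q (\<gamma> * t) * (complex_of_real (ind t) * Xs (kk t) a b))" if ab: "a \<in> S" "b \<in> S" for a b
  proof (rule Bochner_Integration.integrable_bound[where f="\<lambda>t. 3/2 * (nX + G) * E t"])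
    show "integrable lborel (\<lambda>t. 3/2 * (nX + G) * E t)" by (intro Bochner_Integration.integrable_mult_right Eint)
    have [measurable]: "(\<lambda>t. Xs (kk t) a b) \<in> borel_measurable borel" unfolding kk_def by (rule kk_measurable)
    show "(\<lambda>t. fq q (\<gamma> * t) * (complex_of_real (ind t) * Xs (kk t) a b)) \<in> borel_measurable lborel" by measurable
    show "AE t in lborel. norm (fq q (\<gamma> * t) * (complex_of_real (ind t) * Xs (kk t) a b)) \<le> norm (3/2 * (nX + G) * E t)"
    proof (rule AE_I2)
      fix t
      have "cmod (complex_of_real (ind t) * Xs (kk t) a b) \<le> 1 * (nX + G)"
        unfolding norm_mult using ind01[of t] Xsb[OF ab, of "kk t"] by (intro mult_mono) auto
      then have "norm (fq q (\<gamma> * t) * (complex_of_real (ind t) * Xs (kk t) a b)) \<le> (3/2 * E t) * (nX + G)"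
        unfolding norm_mult[of "fq q (\<gamma> * t)"] by (intro mult_mono fqb norm_ge_zero) (auto simp: E0)
      then show "norm (fq q (\<gamma> * t) * (complex_of_real (ind t) * Xs (kk t) a b)) \<le> norm (3/2 * (nX + G) * E t)"
        using nX0 G0 E0[of t] by (simp add: mult_ac)
    qed
  qed
  define F where "F t = (\<lambda>a b. (complex_of_real \<gamma> * fq q (\<gamma> * t)) *
      (heis S H t X a b - complex_of_real (ind t) * Xs (kk t) a b))" for t
  have Fsplit: "(\<lambda>t. F t a b) = (\<lambda>t. complex_of_real \<gamma> * (fq q (\<gamma> * t) * heis S H t X a b)
      - complex_of_real \<gamma> * (fq q (\<gamma> * t) * (complex_of_real (ind t) * Xs (kk t) a b)))" for a b
    by (rule ext) (simp add: F_def algebra_simps)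
  have Fint: "integrable lborel (\<lambda>t. F t a b)" if ab: "a \<in> S" "b \<in> S" for a b
    unfolding Fsplit by (intro Bochner_Integration.integrable_diff Bochner_Integration.integrable_mult_right i1[OF ab] i2[OF ab])
  have Weq: "mdiff (Wfilt S H \<gamma> (fq q) X) W' a b = (LINT t|lborel. F t a b)" if ab: "a \<in> S" "b \<in> S" for a b
  proof -
    have "Wfilt S H \<gamma> (fq q) X a b = complex_of_real \<gamma> * (LINT t|lborel. fq q (\<gamma> * t) * heis S H t X a b)"
      unfolding Wfilt_def using integral_lborel[OF i1[OF ab]] by simp
    then show ?thesis unfolding mdiff_def W'_def Fsplit
      using i1[OF ab] i2[OF ab] by simp
  qed
  define h where "h t = 3/2 * \<gamma> * ((\<epsilon>0 + G) * E t + nX * (E t * indicator {t. T < \<bar>t\<bar>} t))" for t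
  have hint: "integrable lborel h" unfolding h_def
    by (intro Bochner_Integration.integrable_mult_right Bochner_Integration.integrable_add Eint Etint)
  have Fb: "opnorm S (F t) \<le> h t" for t
  proof -
    define D where "D = (\<lambda>a b. heis S H t X a b - complex_of_real (ind t) * Xs (kk t) a b)"
    have "opnorm S (F t) \<le> cmod (complex_of_real \<gamma> * fq q (\<gamma> * t)) * opnorm S D"
      unfolding F_def D_def by (rule opnorm_scale_le[OF S])
    also have "\<dots> \<le> (3/2 * \<gamma> * E t) * (if t \<in> {-T..T} then \<epsilon>0 + G else nX)"
    proof (rule mult_mono)
      show "cmod (complex_of_real \<gamma> * fq q (\<gamma> * t)) \<le> 3/2 * \<gamma> * E t"
        unfolding norm_mult using fqb[of t] \<gamma> by simp
      show "opnorm S D \<le> (if t \<in> {-T..T} then \<epsilon>0 + G else nX)"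
      proof (cases "t \<in> {-T..T}")
        case True
        then have "D = (\<lambda>a b. heis S H t X a b - Xs (kk t) a b)" unfolding D_def ind_def by simp
        then have "opnorm S D \<le> opnorm S (\<lambda>a b. heis S H t X a b - heis S H (tk (kk t)) X a b)
            + opnorm S (\<lambda>a b. heis S H (tk (kk t)) X a b - Xs (kk t) a b)"
          using opnorm_tri3[OF S] by simp
        also have "\<dots> \<le> \<epsilon>0 + G"
          using dlt[OF True tk_range kk_prop[OF True]] Xs(2) by (intro add_mono)
        finally show ?thesis using True by simp
      next
        case False
        then have "D = heis S H t X" unfolding D_def ind_def by simp
        then have "opnorm S D \<le> nX" using opnorm_heis[OF S h, of t X] unfolding nX_def by simp
        then show ?thesis using False by (simp only: if_False)
      qed
      show "0 \<le> opnorm S D" by (rule opnorm_nonneg[OF S])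
      show "0 \<le> 3/2 * \<gamma> * E t" using \<gamma> E0[of t] by simp
    qed
    also have "\<dots> \<le> h t"
    proof (cases "t \<in> {-T..T}")
      case True
      have nn: "0 \<le> 3/2 * \<gamma> * (nX * (E t * indicator {t. T < \<bar>t\<bar>} t))"
        using \<gamma> nX0 E0[of t] by simp
      have "h t = 3/2 * \<gamma> * E t * (\<epsilon>0 + G) + 3/2 * \<gamma> * (nX * (E t * indicator {t. T < \<bar>t\<bar>} t))"
        unfolding h_def by (simp add: field_simps)
      moreover have "(3/2 * \<gamma> * E t) * (if t \<in> {-T..T} then \<epsilon>0 + G else nX) = 3/2 * \<gamma> * E t * (\<epsilon>0 + G)"
        by (simp only: if_P[OF True])
      ultimately show ?thesis using nn by linarith
    next
      case False
      then have "T < \<bar>t\<bar>" by auto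
      then have i1: "indicator {t. T < \<bar>t\<bar>} t = (1::real)" by simp
      have nn: "0 \<le> 3/2 * \<gamma> * ((\<epsilon>0 + G) * E t)"
        using \<gamma> e0 G0 E0[of t] by simp
      have "h t = 3/2 * \<gamma> * ((\<epsilon>0 + G) * E t) + 3/2 * \<gamma> * E t * nX"
        unfolding h_def i1 by (simp add: field_simps)
      moreover have "(3/2 * \<gamma> * E t) * (if t \<in> {-T..T} then \<epsilon>0 + G else nX) = 3/2 * \<gamma> * E t * nX"
        by (simp only: if_not_P[OF False])
      ultimately show ?thesis using nn by linarith
    qed
    finally show ?thesis .
  qed
  have Ih: "(LINT t|lborel. h t) = 3/2 * \<gamma> * ((\<epsilon>0 + G) * (LINT t|lborel. E t)
      + nX * (LINT t|lborel. E t * indicator {t. T < \<bar>t\<bar>} t))"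
    unfolding h_def using Eint Etint by simp
  have Ihb: "(LINT t|lborel. h t) \<le> 6 * q / L * exp (- L\<^sup>2 / (2 * q)) * nX + 6 * sqrt q * G"
  proof -
    have "(LINT t|lborel. h t) \<le> 3/2 * \<gamma> * ((\<epsilon>0 + G) * (4 * sqrt q / \<gamma>)
      + nX * (2 * q * exp (- L\<^sup>2 / (2 * q)) / (\<gamma> * L)))"
      unfolding Ih using \<gamma> e0 G0 nX0 IE IEt
      by (intro mult_left_mono add_mono mult_left_mono) auto
    also have "\<dots> = 6 * sqrt q * \<epsilon>0 + 6 * sqrt q * G + 3 * q * exp (- L\<^sup>2 / (2 * q)) * nX / L"
      using \<gamma> L0 by (simp add: field_simps)
    also have "6 * sqrt q * \<epsilon>0 = 3 * q * exp (- L\<^sup>2 / (2 * q)) * nX / L"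
      unfolding \<epsilon>0_def using sq0 by (simp add: field_simps)
    finally show ?thesis by (simp add: field_simps)
  qed
  have "opnorm S (mdiff (Wfilt S H \<gamma> (fq q) X) W') = opnorm S (\<lambda>a b. LINT t|lborel. F t a b)"
    by (rule opnorm_cong) (rule Weq)
  also have "\<dots> \<le> (LINT t|lborel. h t)" by (rule opnorm_integral[OF S Fint hint Fb])
  also have "\<dots> \<le> (6 * q / L * exp (- L\<^sup>2 / (2 * q)) + 6 * sqrt q * g l * real (card A)) * nX"
    using Ihb unfolding G_def by (simp add: algebra_simps)
  finally have main: "opnorm S (mdiff (Wfilt S H \<gamma> (fq q) X) W')
      \<le> (6 * q / L * exp (- L\<^sup>2 / (2 * q)) + 6 * sqrt q * g l * real (card A)) * nX" .
  show "\<exists>W'. supported_on Lam dm (bnbhd Lam dd l A) W' \<and>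
          opnorm (confs Lam dm)
            (mdiff (Wfilt (confs Lam dm) (ham_sum Lam dm Zs HZ) \<gamma> (fq q) X) W')
          \<le> (6 * q / (l * \<gamma> / v) * exp (- (l * \<gamma> / v)\<^sup>2 / (2 * q))
              + 6 * sqrt q * g l * real (card A)) * opnorm (confs Lam dm) X"
    unfolding S_def[symmetric] H_def[symmetric] B_def[symmetric] L_def[symmetric] nX_def[symmetric]
    using sup main by blast
qed


end
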